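(* Let $\mathbb{F}_d$ be a field with the discrete topology, let $G$ be an effective ample Hausdorff groupoid, and let $\sigma\colon G^{(2)} \to \mathbb{F}_d^\times$ be a continuous $2$-cocycle. Then $A_{\mathbb{F}_d}(G,\sigma)$ is simple if and only if $G$ is minimal.
   Context: Groupoids are locally compact Hausdorff topological groupoids; $G$ is ample if it has a basis of compact open bisections; $G$ is effective if the interior of its isotropy $\{\gamma : r(\gamma) = s(\gamma)\}$ equals $G^{(0)}$. A subset $U \subseteq G^{(0)}$ is invariant if for all $\gamma\in G$, $s(\gamma)\in U \iff r(\gamma)\in U$; $G$ is minimal if $G^{(0)}$ has no open invariant subsets other than $\varnothing$ and $G^{(0)}$. A continuous $2$-cocycle is a continuous (locally constant) $\sigma\colon G^{(2)} \to \mathbb{F}_d^\times$ with $\sigma(\alpha,\beta)\sigma(\alpha\beta,\gamma) = \sigma(\alpha,\beta\gamma)\sigma(\beta,\gamma)$ and $\sigma(r(\gamma),\gamma)=1=\sigma(\gamma,s(\gamma))$. $A_{\mathbb{F}_d}(G,\sigma)$ is the $\mathbb{F}_d$-algebra of locally constant compactly supported functions $G\to\mathbb{F}_d$ with multiplication $(fg)(\gamma) = \sum_{\alpha\beta=\gamma}\sigma(\alpha,\beta)f(\alpha)g(\beta)$; simple means it has no two-sided ideals other than $\{0\}$ and itself. *)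

theory Defs
  imports "HOL-Analysis.Analysis"
begin

text \<open>A groupoid is given by its set of arrows (the carrier of a topology T),
  a partial multiplication m (only meaningful on composable pairs), inversion i,
  source s and range r.\<close>

definition composable :: "'g topology \<Rightarrow> ('g \<Rightarrow> 'g) \<Rightarrow> ('g \<Rightarrow> 'g) \<Rightarrow> ('g \<times> 'g) set"
  where "composable T s r = {(a, b). a \<in> topspace T \<and> b \<in> topspace T \<and> s a = r b}"

definition units :: "'g topology \<Rightarrow> ('g \<Rightarrow> 'g) \<Rightarrow> 'g set"
  where "units T s = s ` topspace T"

definition groupoid ::
  "'g topology \<Rightarrow> ('g \<Rightarrow> 'g \<Rightarrow> 'g) \<Rightarrow> ('g \<Rightarrow> 'g) \<Rightarrow> ('g \<Rightarrow> 'g) \<Rightarrow> ('g \<Rightarrow> 'g) \<Rightarrow> bool"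
  where "groupoid T m i s r \<longleftrightarrow>
    (let G = topspace T in
      (\<forall>a\<in>G. s a \<in> G \<and> r a \<in> G \<and> i a \<in> G) \<and>
      (\<forall>a\<in>G. s (s a) = s a \<and> r (s a) = s a \<and> s (r a) = r a \<and> r (r a) = r a) \<and>
      (\<forall>a\<in>G. \<forall>b\<in>G. s a = r b \<longrightarrow> m a b \<in> G \<and> s (m a b) = s b \<and> r (m a b) = r a) \<and>
      (\<forall>a\<in>G. \<forall>b\<in>G. \<forall>c\<in>G. s a = r b \<longrightarrow> s b = r c \<longrightarrow> m (m a b) c = m a (m b c)) \<and>
      (\<forall>a\<in>G. m (r a) a = a \<and> m a (s a) = a) \<and>
      (\<forall>a\<in>G. s (i a) = r a \<and> r (i a) = s a \<and> m a (i a) = r a \<and> m (i a) a = s a))"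

definition lch_top_groupoid ::
  "'g topology \<Rightarrow> ('g \<Rightarrow> 'g \<Rightarrow> 'g) \<Rightarrow> ('g \<Rightarrow> 'g) \<Rightarrow> ('g \<Rightarrow> 'g) \<Rightarrow> ('g \<Rightarrow> 'g) \<Rightarrow> bool"
  where "lch_top_groupoid T m i s r \<longleftrightarrow>
    groupoid T m i s r \<and> Hausdorff_space T \<and> locally_compact_space T \<and>
    continuous_map (subtopology (prod_topology T T) (composable T s r)) T (\<lambda>(a, b). m a b) \<and>
    continuous_map T T i \<and> continuous_map T T s \<and> continuous_map T T r"

definition open_bisection ::
  "'g topology \<Rightarrow> ('g \<Rightarrow> 'g) \<Rightarrow> ('g \<Rightarrow> 'g) \<Rightarrow> 'g set \<Rightarrow> bool"
  where "open_bisection T s r B \<longleftrightarrow>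
    openin T B \<and>
    openin (subtopology T (units T s)) (r ` B) \<and> openin (subtopology T (units T s)) (s ` B) \<and>
    homeomorphic_map (subtopology T B) (subtopology T (r ` B)) r \<and>
    homeomorphic_map (subtopology T B) (subtopology T (s ` B)) s"

definition ample :: "'g topology \<Rightarrow> ('g \<Rightarrow> 'g) \<Rightarrow> ('g \<Rightarrow> 'g) \<Rightarrow> bool"
  where "ample T s r \<longleftrightarrow>
    (\<forall>U x. openin T U \<and> x \<in> U \<longrightarrow>
       (\<exists>B. open_bisection T s r B \<and> compactin T B \<and> x \<in> B \<and> B \<subseteq> U))"

definition isotropy :: "'g topology \<Rightarrow> ('g \<Rightarrow> 'g) \<Rightarrow> ('g \<Rightarrow> 'g) \<Rightarrow> 'g set"
  where "isotropy T s r = {g \<in> topspace T. r g = s g}"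

definition effective :: "'g topology \<Rightarrow> ('g \<Rightarrow> 'g) \<Rightarrow> ('g \<Rightarrow> 'g) \<Rightarrow> bool"
  where "effective T s r \<longleftrightarrow> T interior_of (isotropy T s r) = units T s"

definition invariant :: "'g topology \<Rightarrow> ('g \<Rightarrow> 'g) \<Rightarrow> ('g \<Rightarrow> 'g) \<Rightarrow> 'g set \<Rightarrow> bool"
  where "invariant T s r U \<longleftrightarrow> U \<subseteq> units T s \<and>
    (\<forall>g\<in>topspace T. s g \<in> U \<longleftrightarrow> r g \<in> U)"

definition minimal :: "'g topology \<Rightarrow> ('g \<Rightarrow> 'g) \<Rightarrow> ('g \<Rightarrow> 'g) \<Rightarrow> bool"
  where "minimal T s r \<longleftrightarrow>
    (\<forall>U. openin (subtopology T (units T s)) U \<and> invariant T s r U \<longrightarrow>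
        U = {} \<or> U = units T s)"

text \<open>Continuous 2-cocycle with values in the multiplicative group of a discrete
  field: locally constant on the composable pairs, nonzero, cocycle identity,
  normalised.\<close>
definition cocycle ::
  "'g topology \<Rightarrow> ('g \<Rightarrow> 'g \<Rightarrow> 'g) \<Rightarrow> ('g \<Rightarrow> 'g) \<Rightarrow> ('g \<Rightarrow> 'g) \<Rightarrow> ('g \<times> 'g \<Rightarrow> 'k::field) \<Rightarrow> bool"
  where "cocycle T m s r \<sigma> \<longleftrightarrow>
    (\<forall>p\<in>composable T s r. \<sigma> p \<noteq> 0) \<and>
    (\<forall>p\<in>composable T s r. \<exists>W. openin (prod_topology T T) W \<and> p \<in> W \<and>
        (\<forall>q\<in>W \<inter> composable T s r. \<sigma> q = \<sigma> p)) \<and>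
    (\<forall>a\<in>topspace T. \<forall>b\<in>topspace T. \<forall>c\<in>topspace T. s a = r b \<longrightarrow> s b = r c \<longrightarrow>
        \<sigma> (a, b) * \<sigma> (m a b, c) = \<sigma> (a, m b c) * \<sigma> (b, c)) \<and>
    (\<forall>g\<in>topspace T. \<sigma> (r g, g) = 1 \<and> \<sigma> (g, s g) = 1)"

text \<open>Steinberg algebra: locally constant, compactly supported functions G \<rightarrow> k
  (extended by 0 outside G), with twisted convolution.\<close>
definition steinberg :: "'g topology \<Rightarrow> ('g \<Rightarrow> 'k::field) set"
  where "steinberg T = {f.
     (\<forall>g. g \<notin> topspace T \<longrightarrow> f g = 0) \<and>
     (\<forall>x\<in>topspace T. \<exists>W. openin T W \<and> x \<in> W \<and> (\<forall>y\<in>W. f y = f x)) \<and>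
     (\<exists>K. compactin T K \<and> (\<forall>g. g \<notin> K \<longrightarrow> f g = 0))}"

definition conv ::
  "'g topology \<Rightarrow> ('g \<Rightarrow> 'g \<Rightarrow> 'g) \<Rightarrow> ('g \<Rightarrow> 'g) \<Rightarrow> ('g \<Rightarrow> 'g) \<Rightarrow> ('g \<times> 'g \<Rightarrow> 'k::field)
    \<Rightarrow> ('g \<Rightarrow> 'k) \<Rightarrow> ('g \<Rightarrow> 'k) \<Rightarrow> 'g \<Rightarrow> 'k"
  where "conv T m s r \<sigma> f h \<gamma> =
    (\<Sum>(a, b) \<in> {(a, b). (a, b) \<in> composable T s r \<and> m a b = \<gamma> \<and> f a \<noteq> 0 \<and> h b \<noteq> 0}.
        \<sigma> (a, b) * f a * h b)"

definition two_sided_ideal ::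
  "'g topology \<Rightarrow> ('g \<Rightarrow> 'g \<Rightarrow> 'g) \<Rightarrow> ('g \<Rightarrow> 'g) \<Rightarrow> ('g \<Rightarrow> 'g) \<Rightarrow> ('g \<times> 'g \<Rightarrow> 'k::field)
    \<Rightarrow> ('g \<Rightarrow> 'k) set \<Rightarrow> bool"
  where "two_sided_ideal T m s r \<sigma> I \<longleftrightarrow>
    I \<subseteq> steinberg T \<and> (\<lambda>_. 0) \<in> I \<and>
    (\<forall>f\<in>I. \<forall>h\<in>I. (\<lambda>g. f g - h g) \<in> I) \<and>
    (\<forall>f\<in>I. \<forall>a\<in>steinberg T. conv T m s r \<sigma> a f \<in> I \<and> conv T m s r \<sigma> f a \<in> I)"

definition simple_steinberg ::
  "'g topology \<Rightarrow> ('g \<Rightarrow> 'g \<Rightarrow> 'g) \<Rightarrow> ('g \<Rightarrow> 'g) \<Rightarrow> ('g \<Rightarrow> 'g) \<Rightarrow> ('g \<times> 'g \<Rightarrow> 'k::field) \<Rightarrow> bool"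
  where "simple_steinberg T m s r \<sigma> \<longleftrightarrow>
    (\<forall>I. two_sided_ideal T m s r \<sigma> I \<longrightarrow> I = {\<lambda>_. 0} \<or> I = steinberg T)"

end

theory Submission
  imports Defs
begin

locale SG =
  fixes T :: "'g topology" and m :: "'g \<Rightarrow> 'g \<Rightarrow> 'g" and i s r :: "'g \<Rightarrow> 'g"
    and \<sigma> :: "'g \<times> 'g \<Rightarrow> 'k::field"
  assumes lch: "lch_top_groupoid T m i s r"
    and amp: "ample T s r"
    and eff: "effective T s r"
    and coc: "cocycle T m s r \<sigma>"
begin

abbreviation "G \<equiv> topspace T"
abbreviation "G0 \<equiv> units T s"

lemma grp: "groupoid T m i s r" using lch by (simp add: lch_top_groupoid_def)

lemma cl: "a \<in> G \<Longrightarrow> s a \<in> G \<and> r a \<in> G \<and> i a \<in> G"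
  using grp unfolding groupoid_def Let_def by blast

lemma sr: "a \<in> G \<Longrightarrow> s (s a) = s a \<and> r (s a) = s a \<and> s (r a) = r a \<and> r (r a) = r a"
  using grp unfolding groupoid_def Let_def by blast

lemma mG: "a \<in> G \<Longrightarrow> b \<in> G \<Longrightarrow> s a = r b \<Longrightarrow> m a b \<in> G \<and> s (m a b) = s b \<and> r (m a b) = r a"
  using grp unfolding groupoid_def Let_def by blast

lemma assoc: "a \<in> G \<Longrightarrow> b \<in> G \<Longrightarrow> c \<in> G \<Longrightarrow> s a = r b \<Longrightarrow> s b = r c \<Longrightarrow> m (m a b) c = m a (m b c)"
  using grp unfolding groupoid_def Let_def by blast

lemma unitl: "a \<in> G \<Longrightarrow> m (r a) a = a" and unitr: "a \<in> G \<Longrightarrow> m a (s a) = a"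
  using grp unfolding groupoid_def Let_def by blast+

lemma inv: "a \<in> G \<Longrightarrow> s (i a) = r a \<and> r (i a) = s a \<and> m a (i a) = r a \<and> m (i a) a = s a"
  using grp unfolding groupoid_def Let_def by blast

lemma G0_iff: "x \<in> G0 \<longleftrightarrow> x \<in> G \<and> s x = x"
proof
  assume "x \<in> G0" then obtain a where "a \<in> G" "x = s a" unfolding units_def by blast
  then show "x \<in> G \<and> s x = x" using cl sr by simp
next
  assume "x \<in> G \<and> s x = x" then show "x \<in> G0" unfolding units_def by (metis image_eqI)
qed

lemma G0_iff_r: "x \<in> G0 \<longleftrightarrow> x \<in> G \<and> r x = x"
  using G0_iff sr by metis

lemma G0_sub: "G0 \<subseteq> G" using G0_iff by blast

lemma sG0: "a \<in> G \<Longrightarrow> s a \<in> G0" and rG0: "a \<in> G \<Longrightarrow> r a \<in> G0"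
  using G0_iff cl sr by auto

lemma ii: assumes "a \<in> G" shows "i (i a) = a"
proof -
  have ia: "i a \<in> G" "i (i a) \<in> G" using cl assms by auto
  have "i (i a) = m (i (i a)) (s (i (i a)))" using unitr ia by simp
  also have "s (i (i a)) = s a" using inv ia assms by simp
  also have "s a = m (i a) a" using inv assms by simp
  also have "m (i (i a)) (m (i a) a) = m (m (i (i a)) (i a)) a"
    using assoc[of "i (i a)" "i a" a] ia assms inv by simp
  also have "m (i (i a)) (i a) = r a" using inv[of "i a"] ia inv assms by simp
  also have "m (r a) a = a" using unitl assms by simp
  finally show ?thesis .
qed

lemma cancel: assumes "a \<in> G" "b \<in> G" "s a = r b" shows "m (i a) (m a b) = b"
proof -
  have "m (i a) (m a b) = m (m (i a) a) b" using assoc[of "i a" a b] assms cl inv by simp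
  also have "\<dots> = b" using inv assms unitl by simp
  finally show ?thesis .
qed

lemma unit_prod: assumes "a \<in> G" "b \<in> G" "s a = r b" "m a b \<in> G0" shows "b = i a"
proof -
  have "r (m a b) = m a b" using assms G0_iff_r by blast
  hence e: "m a b = r a" using mG assms by simp
  have "b = m (i a) (m a b)" using cancel assms by simp
  also have "\<dots> = m (i a) (s (i a))" using e inv assms by simp
  also have "\<dots> = i a" using unitr cl assms by simp
  finally show ?thesis .
qed

lemma unit_act: assumes "u \<in> G0" "b \<in> G" "u = r b" shows "m u b = b"
  using assms unitl by simp

lemma haus: "Hausdorff_space T" using lch by (simp add: lch_top_groupoid_def)
lemma cont_i: "continuous_map T T i" using lch by (simp add: lch_top_groupoid_def)
lemma cont_s: "continuous_map T T s" using lch by (simp add: lch_top_groupoid_def)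
lemma cont_r: "continuous_map T T r" using lch by (simp add: lch_top_groupoid_def)
lemma cont_m: "continuous_map (subtopology (prod_topology T T) (composable T s r)) T (\<lambda>(a, b). m a b)"
  using lch by (simp add: lch_top_groupoid_def)

lemma ampleD: "openin T U \<Longrightarrow> x \<in> U \<Longrightarrow> \<exists>B. open_bisection T s r B \<and> compactin T B \<and> x \<in> B \<and> B \<subseteq> U"
  using amp unfolding ample_def by blast

lemma bis_open: "open_bisection T s r B \<Longrightarrow> openin T B"
  unfolding open_bisection_def by blast

lemma bis_sub: "open_bisection T s r B \<Longrightarrow> B \<subseteq> G"
  using bis_open openin_subset by blast

lemma bis_inj_r: assumes "open_bisection T s r B" shows "inj_on r B"
proof -
  have "homeomorphic_map (subtopology T B) (subtopology T (r ` B)) r"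
    using assms unfolding open_bisection_def by blast
  then have "inj_on r (topspace (subtopology T B))" using homeomorphic_imp_injective_map by blast
  then show ?thesis using bis_sub[OF assms] by (simp add: Int_absorb1)
qed

lemma bis_inj_s: assumes "open_bisection T s r B" shows "inj_on s B"
proof -
  have "homeomorphic_map (subtopology T B) (subtopology T (s ` B)) s"
    using assms unfolding open_bisection_def by blast
  then have "inj_on s (topspace (subtopology T B))" using homeomorphic_imp_injective_map by blast
  then show ?thesis using bis_sub[OF assms] by (simp add: Int_absorb1)
qed

lemma G0_open: "openin T G0"
proof (subst openin_subopen, intro ballI)
  fix u assume u: "u \<in> G0"
  then have uG: "u \<in> G" and ru: "r u = u" using G0_iff_r by auto
  obtain B where B: "open_bisection T s r B" "u \<in> B" using ampleD[of G u] uG by auto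
  define D where "D = {b \<in> G. b \<in> B \<and> r b \<in> B}"
  have "openin T D"
  proof -
    have "openin T {b \<in> G. r b \<in> B}" using openin_continuous_map_preimage[OF cont_r bis_open[OF B(1)]] .
    moreover have "D = B \<inter> {b \<in> G. r b \<in> B}" using bis_sub[OF B(1)] unfolding D_def by auto
    ultimately show ?thesis using bis_open[OF B(1)] by auto
  qed
  moreover have "u \<in> D" using uG ru B unfolding D_def by auto
  moreover have "D \<subseteq> G0"
  proof
    fix b assume "b \<in> D"
    then have b: "b \<in> G" "b \<in> B" "r b \<in> B" unfolding D_def by auto
    have "r (r b) = r b" using sr b by simp
    then have "r b = b" using bis_inj_r[OF B(1)] b by (meson inj_onD)
    then show "b \<in> G0" using G0_iff_r b by auto
  qed
  ultimately show "\<exists>T'. openin T T' \<and> u \<in> T' \<and> T' \<subseteq> G0" by blast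
qed

lemma G0_closed: "closedin T G0"
proof -
  have "closedin T {x \<in> G. s x = id x}"
    by (rule closedin_continuous_maps_eq[OF haus cont_s continuous_map_id])
  moreover have "{x \<in> G. s x = id x} = G0" using G0_iff by auto
  ultimately show ?thesis by simp
qed

lemma bis_img_open_r: assumes B: "open_bisection T s r B" and D: "openin T D" "D \<subseteq> B"
  shows "openin T (r ` D)"
proof -
  have h: "homeomorphic_map (subtopology T B) (subtopology T (r ` B)) r"
    using B unfolding open_bisection_def by blast
  have "openin (subtopology T B) D" using D by (simp add: openin_open_subtopology bis_open[OF B])
  then have "openin (subtopology T (r ` B)) (r ` D)"
    using homeomorphic_imp_open_map[OF h] unfolding open_map_def by blast
  moreover have "openin T (r ` B)"
    using B G0_open openin_trans_full unfolding open_bisection_def by blast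
  ultimately show ?thesis using openin_trans_full by blast
qed

lemma bis_img_open_s: assumes B: "open_bisection T s r B" and D: "openin T D" "D \<subseteq> B"
  shows "openin T (s ` D)"
proof -
  have h: "homeomorphic_map (subtopology T B) (subtopology T (s ` B)) s"
    using B unfolding open_bisection_def by blast
  have "openin (subtopology T B) D" using D by (simp add: openin_open_subtopology bis_open[OF B])
  then have "openin (subtopology T (s ` B)) (s ` D)"
    using homeomorphic_imp_open_map[OF h] unfolding open_map_def by blast
  moreover have "openin T (s ` B)"
    using B G0_open openin_trans_full unfolding open_bisection_def by blast
  ultimately show ?thesis using openin_trans_full by blast
qed

lemma sig_nz: "(a, b) \<in> composable T s r \<Longrightarrow> \<sigma> (a, b) \<noteq> 0"
  using coc unfolding cocycle_def by blast
lemma sig_lc: "p \<in> composable T s r \<Longrightarrow> \<exists>W. openin (prod_topology T T) W \<and> p \<in> W \<and>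
        (\<forall>q\<in>W \<inter> composable T s r. \<sigma> q = \<sigma> p)"
  using coc unfolding cocycle_def by blast
lemma sig_l: "g \<in> G \<Longrightarrow> \<sigma> (r g, g) = 1" and sig_r: "g \<in> G \<Longrightarrow> \<sigma> (g, s g) = 1"
  using coc unfolding cocycle_def by blast+

lemma comp_iff: "(a, b) \<in> composable T s r \<longleftrightarrow> a \<in> G \<and> b \<in> G \<and> s a = r b"
  unfolding composable_def by simp

lemma stein_out: "f \<in> steinberg T \<Longrightarrow> g \<notin> G \<Longrightarrow> f g = 0"
  unfolding steinberg_def by blast

lemma stein_lc: "f \<in> steinberg T \<Longrightarrow> x \<in> G \<Longrightarrow> \<exists>W. openin T W \<and> x \<in> W \<and> (\<forall>y\<in>W. f y = f x)"
  unfolding steinberg_def by blast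

lemma steinI:
  assumes "\<forall>g. g \<notin> G \<longrightarrow> f g = 0" "\<forall>x\<in>G. \<exists>W. openin T W \<and> x \<in> W \<and> (\<forall>y\<in>W. f y = f x)"
    "compactin T K" "\<forall>g. g \<notin> K \<longrightarrow> f g = 0"
  shows "f \<in> steinberg T"
  unfolding steinberg_def using assms by blast

lemma stein_zero: "(\<lambda>_. 0::'k) \<in> steinberg T"
proof -
  have c: "compactin T {}" by simp
  have lc: "\<forall>x\<in>G. \<exists>W. openin T W \<and> x \<in> W \<and> (\<forall>y\<in>W. (0::'k) = 0)" by blast
  have z: "\<forall>g::'g. g \<notin> {} \<longrightarrow> (0::'k) = 0" by simp
  have o: "\<forall>g::'g. g \<notin> G \<longrightarrow> (0::'k) = 0" by simp
  show ?thesis by (rule steinI[where f="\<lambda>_. 0", OF o lc c z])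
qed

lemma stein_diff: assumes "f \<in> steinberg T" "h \<in> steinberg T" shows "(\<lambda>g. f g - h g) \<in> steinberg T"
proof -
  obtain K1 where K1: "compactin T K1" "\<forall>g. g \<notin> K1 \<longrightarrow> f g = 0" using assms(1) unfolding steinberg_def by blast
  obtain K2 where K2: "compactin T K2" "\<forall>g. g \<notin> K2 \<longrightarrow> h g = 0" using assms(2) unfolding steinberg_def by blast
  have lc: "\<forall>x\<in>G. \<exists>W. openin T W \<and> x \<in> W \<and> (\<forall>y\<in>W. f y - h y = f x - h x)"
  proof
    fix x assume xG: "x \<in> G"
    obtain W1 where W1: "openin T W1" "x \<in> W1" "\<forall>y\<in>W1. f y = f x" using stein_lc[OF assms(1) xG] by blast
    obtain W2 where W2: "openin T W2" "x \<in> W2" "\<forall>y\<in>W2. h y = h x" using stein_lc[OF assms(2) xG] by blast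
    have "openin T (W1 \<inter> W2)" using W1(1) W2(1) by (simp add: openin_Int)
    moreover have "x \<in> W1 \<inter> W2" using W1(2) W2(2) by simp
    moreover have "\<forall>y\<in>W1 \<inter> W2. f y - h y = f x - h x"
    proof
      fix y assume "y \<in> W1 \<inter> W2"
      then have "f y = f x" "h y = h x" using W1(3) W2(3) by blast+
      then show "f y - h y = f x - h x" by (simp only:)
    qed
    ultimately show "\<exists>W. openin T W \<and> x \<in> W \<and> (\<forall>y\<in>W. f y - h y = f x - h x)" by blast
  qed
  have c: "compactin T (K1 \<union> K2)" using K1 K2 compactin_Un by blast
  have z: "\<forall>g. g \<notin> K1 \<union> K2 \<longrightarrow> f g - h g = 0" using K1 K2 by simp
  have o: "\<forall>g. g \<notin> G \<longrightarrow> f g - h g = 0" using stein_out[OF assms(1)] stein_out[OF assms(2)] by simp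
  show ?thesis by (rule steinI[OF o lc c z])
qed

lemma stein_ind: fixes d :: 'k assumes "compactin T W" "openin T W" shows "(\<lambda>x. if x \<in> W then d else 0) \<in> steinberg T"
proof -
  have cW: "closedin T W" using compactin_imp_closedin[OF haus assms(1)] .
  have WG: "W \<subseteq> G" using openin_subset assms(2) by blast
  have lc: "\<forall>x\<in>G. \<exists>V. openin T V \<and> x \<in> V \<and> (\<forall>y\<in>V. (if y \<in> W then d else 0) = (if x \<in> W then d else (0::'k)))"
  proof
    fix x assume xG: "x \<in> G"
    show "\<exists>V. openin T V \<and> x \<in> V \<and> (\<forall>y\<in>V. (if y \<in> W then d else 0) = (if x \<in> W then d else (0::'k)))"
    proof (cases "x \<in> W")
      case True
      have "\<forall>y\<in>W. (if y \<in> W then d else 0) = (if x \<in> W then d else (0::'k))" using True by simp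
      then show ?thesis using assms(2) True by blast
    next
      case False
      have "openin T (G - W)" using cW closedin_def by blast
      moreover have "x \<in> G - W" using False xG by blast
      moreover have "\<forall>y\<in>G - W. (if y \<in> W then d else 0) = (if x \<in> W then d else (0::'k))" using False by simp
      ultimately show ?thesis by blast
    qed
  qed
  have z: "\<forall>g. g \<notin> W \<longrightarrow> (if g \<in> W then d else 0) = 0" by simp
  have o: "\<forall>g. g \<notin> G \<longrightarrow> (if g \<in> W then d else 0) = 0" using WG by auto
  show ?thesis by (rule steinI[OF o lc assms(1) z])
qed

definition supp :: "('g \<Rightarrow> 'k) \<Rightarrow> 'g set" where "supp f = {a \<in> G. f a \<noteq> 0}"

lemma supp_compact: assumes "f \<in> steinberg T" shows "compactin T (supp f)"
proof -
  obtain K where K: "compactin T K" "\<forall>g. g \<notin> K \<longrightarrow> f g = 0" using assms unfolding steinberg_def by blast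
  have "openin T {a \<in> G. f a = 0}"
  proof (subst openin_subopen, intro ballI)
    fix x assume "x \<in> {a \<in> G. f a = 0}"
    then have x: "x \<in> G" "f x = 0" by auto
    obtain W where W: "openin T W" "x \<in> W" "\<forall>y\<in>W. f y = f x" using stein_lc[OF assms x(1)] by blast
    have "W \<subseteq> G" using openin_subset W(1) by blast
    then have "W \<subseteq> {a \<in> G. f a = 0}" using W(3) x(2) by (metis (mono_tags, lifting) mem_Collect_eq subsetI subsetD)
    then show "\<exists>T'. openin T T' \<and> x \<in> T' \<and> T' \<subseteq> {a \<in> G. f a = 0}"
      using W by blast
  qed
  moreover have "G - supp f = {a \<in> G. f a = 0}" unfolding supp_def by auto
  moreover have "supp f \<subseteq> G" unfolding supp_def by auto
  ultimately have cs: "closedin T (supp f)" unfolding closedin_def by simp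
  have "supp f \<subseteq> K" using K(2) unfolding supp_def by blast
  then show ?thesis using closed_compactin[OF K(1) _ cs] by blast
qed

lemma conv_LU:
  assumes V: "V \<subseteq> G0" and g: "\<forall>x. x \<notin> G \<longrightarrow> g x = 0"
  shows "conv T m s r \<sigma> (\<lambda>x. if x \<in> V then d else 0) g \<gamma> = (if r \<gamma> \<in> V then d * g \<gamma> else 0)"
proof -
  let ?S = "{(a, b). (a, b) \<in> composable T s r \<and> m a b = \<gamma> \<and> (if a \<in> V then d else 0) \<noteq> 0 \<and> g b \<noteq> 0}"
  have S: "?S = (if \<gamma> \<in> G \<and> r \<gamma> \<in> V \<and> d \<noteq> 0 \<and> g \<gamma> \<noteq> 0 then {(r \<gamma>, \<gamma>)} else {})"
  proof -
    have "(a, b) \<in> ?S \<longleftrightarrow> \<gamma> \<in> G \<and> r \<gamma> \<in> V \<and> d \<noteq> 0 \<and> g \<gamma> \<noteq> 0 \<and> a = r \<gamma> \<and> b = \<gamma>" for a b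
    proof
      assume ab: "(a, b) \<in> ?S"
      then have a: "a \<in> V" "a \<in> G0" and d: "d \<noteq> 0" using V by (auto split: if_splits)
      have c: "a \<in> G" "b \<in> G" "s a = r b" "m a b = \<gamma>" "g b \<noteq> 0" using ab comp_iff by auto
      have "s a = a" using a G0_iff by blast
      then have "a = r b" using c by simp
      then have "m a b = b" using unitl c by simp
      then show "\<gamma> \<in> G \<and> r \<gamma> \<in> V \<and> d \<noteq> 0 \<and> g \<gamma> \<noteq> 0 \<and> a = r \<gamma> \<and> b = \<gamma>"
        using c a d \<open>a = r b\<close> by auto
    next
      assume h: "\<gamma> \<in> G \<and> r \<gamma> \<in> V \<and> d \<noteq> 0 \<and> g \<gamma> \<noteq> 0 \<and> a = r \<gamma> \<and> b = \<gamma>"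
      then show "(a, b) \<in> ?S" using comp_iff cl sr unitl by auto
    qed
    then show ?thesis by auto
  qed
  show ?thesis
  proof (cases "\<gamma> \<in> G")
    case True then show ?thesis unfolding conv_def S using sig_l by auto
  next
    case False then show ?thesis unfolding conv_def S using g by auto
  qed
qed

lemma conv_RU:
  assumes V: "V \<subseteq> G0" and g: "\<forall>x. x \<notin> G \<longrightarrow> g x = 0"
  shows "conv T m s r \<sigma> g (\<lambda>x. if x \<in> V then d else 0) \<gamma> = (if s \<gamma> \<in> V then g \<gamma> * d else 0)"
proof -
  let ?S = "{(a, b). (a, b) \<in> composable T s r \<and> m a b = \<gamma> \<and> g a \<noteq> 0 \<and> (if b \<in> V then d else 0) \<noteq> 0}"
  have S: "?S = (if \<gamma> \<in> G \<and> s \<gamma> \<in> V \<and> d \<noteq> 0 \<and> g \<gamma> \<noteq> 0 then {(\<gamma>, s \<gamma>)} else {})"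
  proof -
    have "(a, b) \<in> ?S \<longleftrightarrow> \<gamma> \<in> G \<and> s \<gamma> \<in> V \<and> d \<noteq> 0 \<and> g \<gamma> \<noteq> 0 \<and> a = \<gamma> \<and> b = s \<gamma>" for a b
    proof
      assume ab: "(a, b) \<in> ?S"
      then have a: "b \<in> V" "b \<in> G0" and d: "d \<noteq> 0" using V by (auto split: if_splits)
      have c: "a \<in> G" "b \<in> G" "s a = r b" "m a b = \<gamma>" "g a \<noteq> 0" using ab comp_iff by auto
      have "r b = b" using a G0_iff_r by blast
      then have "b = s a" using c by simp
      then have "m a b = a" using unitr[of a] c(1) by simp
      then have ga: "\<gamma> = a" using c(4) by simp
      show "\<gamma> \<in> G \<and> s \<gamma> \<in> V \<and> d \<noteq> 0 \<and> g \<gamma> \<noteq> 0 \<and> a = \<gamma> \<and> b = s \<gamma>"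
        unfolding ga using c(1,5) a(1) d \<open>b = s a\<close> by blast
    next
      assume h: "\<gamma> \<in> G \<and> s \<gamma> \<in> V \<and> d \<noteq> 0 \<and> g \<gamma> \<noteq> 0 \<and> a = \<gamma> \<and> b = s \<gamma>"
      then show "(a, b) \<in> ?S" using comp_iff cl sr unitr by auto
    qed
    then show ?thesis by auto
  qed
  show ?thesis
  proof (cases "\<gamma> \<in> G")
    case True then show ?thesis unfolding conv_def S using sig_r by auto
  next
    case False then show ?thesis unfolding conv_def S using g by auto
  qed
qed

definition ind :: "'g set \<Rightarrow> 'g \<Rightarrow> 'k" where "ind W = (\<lambda>x. if x \<in> W then 1 else 0)"

lemma ind_stein: "compactin T W \<Longrightarrow> openin T W \<Longrightarrow> ind W \<in> steinberg T"
  unfolding ind_def by (rule stein_ind)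

lemma conv_bis_inv:
  assumes B: "open_bisection T s r B" and g0: "\<gamma>0 \<in> G" "i \<gamma>0 \<in> B" and f: "\<forall>x. x \<notin> G \<longrightarrow> f x = 0"
  shows "conv T m s r \<sigma> f (ind B) (r \<gamma>0) = \<sigma> (\<gamma>0, i \<gamma>0) * f \<gamma>0"
proof -
  let ?S = "{(a, b). (a, b) \<in> composable T s r \<and> m a b = r \<gamma>0 \<and> f a \<noteq> 0 \<and> ind B b \<noteq> 0}"
  have mem: "(a, b) \<in> ?S \<longleftrightarrow> f \<gamma>0 \<noteq> 0 \<and> a = \<gamma>0 \<and> b = i \<gamma>0" for a b
  proof
    assume ab: "(a, b) \<in> ?S"
    then have c: "a \<in> G" "b \<in> G" "s a = r b" "m a b = r \<gamma>0" "f a \<noteq> 0" "b \<in> B"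
      using comp_iff unfolding ind_def by (auto split: if_splits)
    have "m a b \<in> G0" using c(4) rG0 g0(1) by simp
    then have bi: "b = i a" using unit_prod c by blast
    have "r (m a b) = r a" using mG[OF c(1,2,3)] by blast
    then have "r a = r (r \<gamma>0)" using c(4) by simp
    then have "r a = r \<gamma>0" using sr g0(1) by simp
    then have "s (i a) = s (i \<gamma>0)" using inv c(1) g0(1) by simp
    then have "i a = i \<gamma>0" using bis_inj_s[OF B] c(6) bi g0(2) by (metis inj_onD)
    then have "a = \<gamma>0" using ii c(1) g0(1) by metis
    then show "f \<gamma>0 \<noteq> 0 \<and> a = \<gamma>0 \<and> b = i \<gamma>0" using bi c(5) by simp
  next
    assume h: "f \<gamma>0 \<noteq> 0 \<and> a = \<gamma>0 \<and> b = i \<gamma>0"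
    then show "(a, b) \<in> ?S" using comp_iff cl inv g0 unfolding ind_def by auto
  qed
  have S: "?S = (if f \<gamma>0 \<noteq> 0 then {(\<gamma>0, i \<gamma>0)} else {})"
    using mem by auto
  show ?thesis unfolding conv_def S using g0 unfolding ind_def by auto
qed

definition linv :: "'g set \<Rightarrow> 'g \<Rightarrow> 'k" where
  "linv B = (\<lambda>b. if b \<in> G \<and> i b \<in> B then inverse (\<sigma> (i b, b)) else 0)"

lemma cont_ipair: "continuous_map T (prod_topology T T) (\<lambda>y. (i y, y))"
  by (intro continuous_map_pairedI cont_i continuous_map_id[unfolded id_def])

lemma linv_stein: assumes B: "open_bisection T s r B" "compactin T B" shows "linv B \<in> steinberg T"
proof -
  have cB: "closedin T B" using compactin_imp_closedin[OF haus B(2)] .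
  have o: "\<forall>g. g \<notin> G \<longrightarrow> linv B g = 0" unfolding linv_def by simp
  have lc: "\<forall>x\<in>G. \<exists>W. openin T W \<and> x \<in> W \<and> (\<forall>y\<in>W. linv B y = linv B x)"
  proof
    fix x assume xG: "x \<in> G"
    show "\<exists>W. openin T W \<and> x \<in> W \<and> (\<forall>y\<in>W. linv B y = linv B x)"
    proof (cases "i x \<in> B")
      case True
      have "(i x, x) \<in> composable T s r" using comp_iff cl inv xG by simp
      then obtain W where W: "openin (prod_topology T T) W" "(i x, x) \<in> W"
        "\<forall>q\<in>W \<inter> composable T s r. \<sigma> q = \<sigma> (i x, x)" using sig_lc by blast
      define N where "N = {y \<in> G. i y \<in> B} \<inter> {y \<in> G. (i y, y) \<in> W}"
      have "openin T N" unfolding N_def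
        using openin_continuous_map_preimage[OF cont_i bis_open[OF B(1)]]
          openin_continuous_map_preimage[OF cont_ipair W(1)] by blast
      moreover have "x \<in> N" unfolding N_def using xG True W(2) by simp
      moreover have "\<forall>y\<in>N. linv B y = linv B x"
      proof
        fix y assume y: "y \<in> N"
        then have "(i y, y) \<in> composable T s r" unfolding N_def using comp_iff cl inv by simp
        then have "\<sigma> (i y, y) = \<sigma> (i x, x)" using W(3) y unfolding N_def by blast
        then show "linv B y = linv B x" using y xG True unfolding N_def linv_def by simp
      qed
      ultimately show ?thesis by blast
    next
      case False
      define N where "N = {y \<in> G. i y \<in> G - B}"
      have "openin T (G - B)" using cB closedin_def by blast
      then have "openin T N" unfolding N_def using openin_continuous_map_preimage[OF cont_i] by blast
      moreover have "x \<in> N" unfolding N_def using xG False cl by simp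
      moreover have "\<forall>y\<in>N. linv B y = linv B x" using False unfolding N_def linv_def by simp
      ultimately show ?thesis by blast
    qed
  qed
  have c: "compactin T (i ` B)" using image_compactin[OF B(2) cont_i] .
  have z: "\<forall>g. g \<notin> i ` B \<longrightarrow> linv B g = 0"
  proof (intro allI impI)
    fix g assume "g \<notin> i ` B"
    then show "linv B g = 0" unfolding linv_def using ii by (metis image_eqI)
  qed
  show ?thesis by (rule steinI[OF o lc c z])
qed

lemma conv_ind_linv:
  assumes B: "open_bisection T s r B"
  shows "conv T m s r \<sigma> (ind B) (linv B) \<gamma> = ind (r ` B) \<gamma>"
proof -
  let ?S = "{(a, b). (a, b) \<in> composable T s r \<and> m a b = \<gamma> \<and> ind B a \<noteq> 0 \<and> linv B b \<noteq> 0}"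
  have BG: "B \<subseteq> G" using bis_sub[OF B] .
  have mem: "(a, b) \<in> ?S \<longleftrightarrow> a \<in> B \<and> r a = \<gamma> \<and> b = i a" for a b
  proof
    assume ab: "(a, b) \<in> ?S"
    then have c: "a \<in> G" "b \<in> G" "s a = r b" "m a b = \<gamma>" "a \<in> B" "i b \<in> B"
      using comp_iff unfolding ind_def linv_def by (auto split: if_splits)
    have "s (i b) = s a" using inv c(2,3) by simp
    then have "i b = a" using bis_inj_s[OF B] c(5,6) by (metis inj_onD)
    then have bi: "b = i a" using ii c(2) by metis
    have "m a b = r a" using bi inv c(1) by simp
    then show "a \<in> B \<and> r a = \<gamma> \<and> b = i a" using c(4,5) bi by simp
  next
    assume h: "a \<in> B \<and> r a = \<gamma> \<and> b = i a"
    then have aG: "a \<in> G" using BG by blast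
    have "\<sigma> (a, i a) \<noteq> 0" using sig_nz comp_iff cl inv aG by simp
    then show "(a, b) \<in> ?S" using h comp_iff cl inv aG ii unfolding ind_def linv_def by auto
  qed
  show ?thesis
  proof (cases "\<gamma> \<in> r ` B")
    case True
    then obtain a where a: "a \<in> B" "r a = \<gamma>" by blast
    have "?S = {(a, i a)}"
    proof (rule set_eqI)
      fix p show "p \<in> ?S \<longleftrightarrow> p \<in> {(a, i a)}"
      proof (cases p)
        case (Pair x y)
        have "x \<in> B \<and> r x = \<gamma> \<longleftrightarrow> x = a" using a bis_inj_r[OF B] by (metis inj_onD)
        then show ?thesis using mem[of x y] Pair by auto
      qed
    qed
    moreover have aG: "a \<in> G" using a BG by blast
    moreover have "\<sigma> (a, i a) \<noteq> 0" using sig_nz comp_iff cl inv aG by simp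
    ultimately show ?thesis unfolding conv_def ind_def linv_def using True a ii cl by simp
  next
    case False
    have e: "?S = {}" using mem False by auto
    show ?thesis unfolding conv_def e using False unfolding ind_def by simp
  qed
qed

lemma compact_cover:
  assumes "compactin T K" "\<forall>x\<in>K. \<exists>U. openin T U \<and> x \<in> U \<and> P U"
  shows "\<exists>F. finite F \<and> (\<forall>U\<in>F. openin T U \<and> P U) \<and> K \<subseteq> \<Union>F"
proof -
  let ?U = "{U. openin T U \<and> P U}"
  have k: "K \<subseteq> \<Union>?U" using assms(2) by blast
  have o: "\<And>U. U \<in> ?U \<Longrightarrow> openin T U" by blast
  have "\<exists>F. finite F \<and> F \<subseteq> ?U \<and> K \<subseteq> \<Union>F" by (rule compactinD[OF assms(1) o k])
  then obtain F where "finite F" "F \<subseteq> ?U" "K \<subseteq> \<Union>F" by blast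
  then show ?thesis by blast
qed

lemma eff_step:
  assumes D: "open_bisection T s r D" "D \<inter> G0 = {}" and V: "openin T V" "V \<subseteq> G0" "V \<noteq> {}"
  shows "\<exists>V'. openin T V' \<and> V' \<noteq> {} \<and> V' \<subseteq> V \<and> (\<forall>d\<in>D. \<not> (r d \<in> V' \<and> s d \<in> V'))"
proof (cases "\<forall>d\<in>D. r d \<in> V \<longrightarrow> s d = r d")
  case True
  define E where "E = D \<inter> {y \<in> G. r y \<in> V}"
  have oE: "openin T E" unfolding E_def by (intro openin_Int bis_open[OF D(1)] openin_continuous_map_preimage[OF cont_r V(1)])
  have "E \<subseteq> isotropy T s r" unfolding E_def isotropy_def using True by auto
  then have "E \<subseteq> T interior_of (isotropy T s r)" using interior_of_maximal oE by blast
  then have "E \<subseteq> G0" using eff unfolding effective_def by simp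
  then have "E = {}" using D(2) unfolding E_def by blast
  then have "\<forall>d\<in>D. \<not> (r d \<in> V \<and> s d \<in> V)" unfolding E_def using bis_sub[OF D(1)] by blast
  then show ?thesis using V by blast
next
  case False
  then obtain d where d: "d \<in> D" "r d \<in> V" "s d \<noteq> r d" by blast
  have dG: "d \<in> G" using d bis_sub[OF D(1)] by blast
  have rs: "r d \<in> G \<and> s d \<in> G \<and> r d \<noteq> s d" using cl[OF dG] d(3) by auto
  have "\<exists>P Q. openin T P \<and> openin T Q \<and> r d \<in> P \<and> s d \<in> Q \<and> disjnt P Q"
    using haus[unfolded Hausdorff_space_def, rule_format, OF rs] .
  then obtain P Q where PQ: "openin T P" "openin T Q" "r d \<in> P" "s d \<in> Q" "disjnt P Q" by blast
  define D' where "D' = D \<inter> {y \<in> G. r y \<in> P \<inter> V} \<inter> {y \<in> G. s y \<in> Q}"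
  have o1: "openin T {y \<in> G. r y \<in> P \<inter> V}"
    using openin_continuous_map_preimage[OF cont_r openin_Int[OF PQ(1) V(1)]] .
  have o2: "openin T {y \<in> G. s y \<in> Q}" using openin_continuous_map_preimage[OF cont_s PQ(2)] .
  have oD': "openin T D'" unfolding D'_def by (intro openin_Int bis_open[OF D(1)] o1 o2)
  have D'D: "D' \<subseteq> D" unfolding D'_def by blast
  have "openin T (r ` D')" using bis_img_open_r[OF D(1) oD' D'D] .
  moreover have "r ` D' \<noteq> {}"
  proof -
    have "d \<in> D'" unfolding D'_def using d(1,2) dG PQ(3,4) by simp
    then show ?thesis by blast
  qed
  moreover have "r ` D' \<subseteq> V" unfolding D'_def by blast
  moreover have "\<forall>d2\<in>D. \<not> (r d2 \<in> r ` D' \<and> s d2 \<in> r ` D')"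
  proof (intro ballI notI)
    fix d2 assume d2: "d2 \<in> D" "r d2 \<in> r ` D' \<and> s d2 \<in> r ` D'"
    then obtain y where y: "y \<in> D'" "r d2 = r y" by blast
    then have "d2 = y" using bis_inj_r[OF D(1)] d2(1) D'D by (metis inj_onD subsetD)
    then have "s d2 \<in> Q" using y unfolding D'_def by blast
    moreover have "s d2 \<in> P"
    proof -
      obtain z where "z \<in> D'" "s d2 = r z" using d2(2) by blast
      then show ?thesis unfolding D'_def by simp
    qed
    ultimately show False using PQ(5) unfolding disjnt_def by blast
  qed
  ultimately show ?thesis by blast
qed

lemma eff_iter:
  assumes "finite F" "\<forall>D\<in>F. open_bisection T s r D \<and> D \<inter> G0 = {}"
    "openin T V" "V \<subseteq> G0" "V \<noteq> {}"
  shows "\<exists>V'. openin T V' \<and> V' \<noteq> {} \<and> V' \<subseteq> V \<and> (\<forall>D\<in>F. \<forall>d\<in>D. \<not> (r d \<in> V' \<and> s d \<in> V'))"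
  using assms
proof (induction F arbitrary: V rule: finite_induct)
  case empty
  have "openin T V \<and> V \<noteq> {} \<and> V \<subseteq> V \<and> (\<forall>D\<in>{}. \<forall>d\<in>D. \<not> (r d \<in> V \<and> s d \<in> V))"
    using empty.prems by simp
  then show ?case by (rule exI)
next
  case (insert D F)
  have p1: "\<forall>D\<in>F. open_bisection T s r D \<and> D \<inter> G0 = {}" using insert.prems(1) by simp
  obtain V1 where V1: "openin T V1" "V1 \<noteq> {}" "V1 \<subseteq> V" "\<forall>D\<in>F. \<forall>d\<in>D. \<not> (r d \<in> V1 \<and> s d \<in> V1)"
    using insert.IH[OF p1 insert.prems(2,3,4)] by blast
  have bD: "open_bisection T s r D" "D \<inter> G0 = {}" using insert.prems(1) by simp_all
  have V1G0: "V1 \<subseteq> G0" using V1(3) insert.prems(3) by (rule order_trans)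
  obtain V2 where V2: "openin T V2" "V2 \<noteq> {}" "V2 \<subseteq> V1" "\<forall>d\<in>D. \<not> (r d \<in> V2 \<and> s d \<in> V2)"
    using eff_step[OF bD V1(1) V1G0 V1(2)] by blast
  have "\<forall>D\<in>insert D F. \<forall>d\<in>D. \<not> (r d \<in> V2 \<and> s d \<in> V2)"
  proof
    fix D' assume "D' \<in> insert D F"
    then show "\<forall>d\<in>D'. \<not> (r d \<in> V2 \<and> s d \<in> V2)"
    proof
      assume "D' = D" then show ?thesis using V2(4) by simp
    next
      assume "D' \<in> F" then show ?thesis using V1(4) V2(3) by blast
    qed
  qed
  moreover have "V2 \<subseteq> V" using V2(3) V1(3) by (rule order_trans)
  ultimately show ?case using V2(1,2) by blast
qed

lemma idl_sub: "two_sided_ideal T m s r \<sigma> I \<Longrightarrow> I \<subseteq> steinberg T"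
  unfolding two_sided_ideal_def by blast
lemma idl_zero: "two_sided_ideal T m s r \<sigma> I \<Longrightarrow> (\<lambda>_. 0) \<in> I"
  unfolding two_sided_ideal_def by blast
lemma idl_diff: "two_sided_ideal T m s r \<sigma> I \<Longrightarrow> f \<in> I \<Longrightarrow> h \<in> I \<Longrightarrow> (\<lambda>g. f g - h g) \<in> I"
  unfolding two_sided_ideal_def by blast
lemma idl_l: "two_sided_ideal T m s r \<sigma> I \<Longrightarrow> a \<in> steinberg T \<Longrightarrow> f \<in> I \<Longrightarrow> conv T m s r \<sigma> a f \<in> I"
  unfolding two_sided_ideal_def by blast
lemma idl_r: "two_sided_ideal T m s r \<sigma> I \<Longrightarrow> a \<in> steinberg T \<Longrightarrow> f \<in> I \<Longrightarrow> conv T m s r \<sigma> f a \<in> I"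
  unfolding two_sided_ideal_def by blast

lemma unit_in_ideal:
  assumes I: "two_sided_ideal T m s r \<sigma> I" and gI: "g \<in> I" and u: "u \<in> G0" "g u \<noteq> 0"
  shows "\<exists>V. compactin T V \<and> openin T V \<and> V \<subseteq> G0 \<and> V \<noteq> {} \<and> ind V \<in> I"
proof -
  have gS: "g \<in> steinberg T" using idl_sub[OF I] gI by blast
  have uG: "u \<in> G" using u G0_sub by blast
  obtain W where W: "openin T W" "u \<in> W" "\<forall>y\<in>W. g y = g u" using stein_lc[OF gS uG] by blast
  define c where "c = g u"
  have c0: "c \<noteq> 0" using u c_def by simp
  define W0 where "W0 = W \<inter> G0"
  have oW0: "openin T W0" unfolding W0_def using W(1) G0_open by blast
  have cG0: "closedin T (G - G0)" using G0_open G0_sub unfolding closedin_def by (simp add: Diff_Diff_Int Int_absorb1)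
  have oGG0: "openin T (G - G0)" using G0_closed unfolding closedin_def by blast
  define N where "N = supp g \<inter> (G - G0)"
  have cN: "compactin T N" unfolding N_def by (rule compact_Int_closedin[OF supp_compact[OF gS] cG0])
  have cov: "\<forall>x\<in>N. \<exists>U. openin T U \<and> x \<in> U \<and> (open_bisection T s r U \<and> U \<inter> G0 = {})"
  proof
    fix x assume "x \<in> N"
    then have "x \<in> G - G0" unfolding N_def by blast
    then obtain B where "open_bisection T s r B" "x \<in> B" "B \<subseteq> G - G0" using ampleD[OF oGG0] by blast
    then show "\<exists>U. openin T U \<and> x \<in> U \<and> (open_bisection T s r U \<and> U \<inter> G0 = {})"
      using bis_open by blast
  qed
  obtain F where F: "finite F" "\<forall>U\<in>F. openin T U \<and> (open_bisection T s r U \<and> U \<inter> G0 = {})" "N \<subseteq> \<Union>F"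
    using compact_cover[OF cN cov] by blast
  have W0ne: "W0 \<noteq> {}" using W(2) u unfolding W0_def by blast
  have W0s: "W0 \<subseteq> G0" unfolding W0_def by blast
  have F2: "\<forall>D\<in>F. open_bisection T s r D \<and> D \<inter> G0 = {}" using F(2) by blast
  obtain V where V: "openin T V" "V \<noteq> {}" "V \<subseteq> W0" "\<forall>D\<in>F. \<forall>d\<in>D. \<not> (r d \<in> V \<and> s d \<in> V)"
    using eff_iter[OF F(1) F2 oW0 W0s W0ne] by blast
  obtain x where x: "x \<in> V" using V(2) by blast
  obtain V2 where V2: "open_bisection T s r V2" "compactin T V2" "x \<in> V2" "V2 \<subseteq> V"
    using ampleD[OF V(1) x] by blast
  have oV2: "openin T V2" using bis_open[OF V2(1)] .
  have V2G0: "V2 \<subseteq> G0" using V2(4) V(3) unfolding W0_def by blast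
  have V2W: "V2 \<subseteq> W" using V2(4) V(3) unfolding W0_def by blast
  have iV2: "ind V2 \<in> steinberg T" using ind_stein[OF V2(2) oV2] .
  define h1 where "h1 = conv T m s r \<sigma> (ind V2) g"
  have h1I: "h1 \<in> I" unfolding h1_def using idl_l[OF I iV2 gI] .
  have h1e: "h1 \<gamma> = (if r \<gamma> \<in> V2 then g \<gamma> else 0)" for \<gamma>
    unfolding h1_def ind_def using conv_LU[OF V2G0, of g 1 \<gamma>] stein_out[OF gS] by simp
  define h2 where "h2 = conv T m s r \<sigma> h1 (ind V2)"
  have h2I: "h2 \<in> I" unfolding h2_def using idl_r[OF I iV2 h1I] .
  have h1S: "h1 \<in> steinberg T" using h1I idl_sub[OF I] by blast
  have h2e: "h2 \<gamma> = (if s \<gamma> \<in> V2 \<and> r \<gamma> \<in> V2 then g \<gamma> else 0)" for \<gamma>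
    unfolding h2_def ind_def using conv_RU[OF V2G0, of h1 1 \<gamma>] stein_out[OF h1S] h1e by simp
  have h2c: "h2 = (\<lambda>\<gamma>. if \<gamma> \<in> V2 then c else 0)"
  proof
    fix \<gamma>
    show "h2 \<gamma> = (if \<gamma> \<in> V2 then c else 0)"
    proof (cases "\<gamma> \<in> G0")
      case True
      then have "s \<gamma> = \<gamma>" "r \<gamma> = \<gamma>" using G0_iff G0_iff_r by blast+
      moreover have "g \<gamma> = c" if "\<gamma> \<in> V2"
      proof -
        have "\<gamma> \<in> W" using that V2W by blast
        then have "g \<gamma> = g u" by (rule bspec[OF W(3)])
        then show ?thesis unfolding c_def .
      qed
      ultimately show ?thesis using h2e[of \<gamma>] by simp
    next
      case False
      then have nV2: "\<gamma> \<notin> V2" using V2G0 by blast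
      have "h2 \<gamma> = 0"
      proof (cases "\<gamma> \<in> G")
        case False
        then show ?thesis using stein_out[OF gS] h2e by simp
      next
        case True
        show ?thesis
        proof (rule ccontr)
          assume "h2 \<gamma> \<noteq> 0"
          then have a: "s \<gamma> \<in> V2" "r \<gamma> \<in> V2" "g \<gamma> \<noteq> 0" using h2e[of \<gamma>] by (auto split: if_splits)
          then have "\<gamma> \<in> N" unfolding N_def supp_def using True False by blast
          then obtain D where "D \<in> F" "\<gamma> \<in> D" using F(3) by blast
          then show False using V(4) a V2(4) by blast
        qed
      qed
      then show ?thesis using nV2 by simp
    qed
  qed
  have kS: "(\<lambda>x. if x \<in> V2 then inverse c else 0) \<in> steinberg T" using stein_ind[OF V2(2) oV2] .
  have kI: "conv T m s r \<sigma> (\<lambda>x. if x \<in> V2 then inverse c else 0) h2 \<in> I" using idl_l[OF I kS h2I] .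
  have h2S: "h2 \<in> steinberg T" using h2I idl_sub[OF I] by blast
  have "conv T m s r \<sigma> (\<lambda>x. if x \<in> V2 then inverse c else 0) h2 = ind V2"
  proof
    fix \<gamma>
    have e: "conv T m s r \<sigma> (\<lambda>x. if x \<in> V2 then inverse c else 0) h2 \<gamma> = (if r \<gamma> \<in> V2 then inverse c * h2 \<gamma> else 0)"
      using conv_LU[OF V2G0, of h2 "inverse c" \<gamma>] stein_out[OF h2S] by simp
    show "conv T m s r \<sigma> (\<lambda>x. if x \<in> V2 then inverse c else 0) h2 \<gamma> = ind V2 \<gamma>"
    proof (cases "\<gamma> \<in> V2")
      case True
      then have "r \<gamma> = \<gamma>" using V2G0 G0_iff_r by blast
      then show ?thesis using e True c0 unfolding h2c ind_def by simp
    next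
      case False
      then show ?thesis using e unfolding h2c ind_def by simp
    qed
  qed
  then have "ind V2 \<in> I" using kI by simp
  then show ?thesis using V2(2,3) oV2 V2G0 by blast
qed

definition good :: "('g \<Rightarrow> 'k) set \<Rightarrow> 'g set \<Rightarrow> bool" where
  "good I W \<longleftrightarrow> compactin T W \<and> openin T W \<and> W \<subseteq> G0 \<and> ind W \<in> I"

lemma ind_out: "W \<subseteq> G \<Longrightarrow> \<forall>x. x \<notin> G \<longrightarrow> ind W x = 0"
  unfolding ind_def by auto

lemma good_Un:
  assumes I: "two_sided_ideal T m s r \<sigma> I" and g1: "good I W1" and g2: "good I W2"
  shows "good I (W1 \<union> W2)"
proof -
  have W1: "compactin T W1" "openin T W1" "W1 \<subseteq> G0" "ind W1 \<in> I" using g1 unfolding good_def by auto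
  have W2: "compactin T W2" "openin T W2" "W2 \<subseteq> G0" "ind W2 \<in> I" using g2 unfolding good_def by auto
  have W1G: "W1 \<subseteq> G" using W1(3) G0_sub by blast
  have s2: "ind W2 \<in> steinberg T" using ind_stein[OF W2(1,2)] .
  have "conv T m s r \<sigma> (ind W1) (ind W2) = ind (W1 \<inter> W2)"
  proof
    fix \<gamma>
    have e: "conv T m s r \<sigma> (ind W1) (ind W2) \<gamma> = (if s \<gamma> \<in> W2 then ind W1 \<gamma> * 1 else 0)"
      unfolding ind_def[of W2] using conv_RU[OF W2(3) ind_out[OF W1G], of 1 \<gamma>] by simp
    show "conv T m s r \<sigma> (ind W1) (ind W2) \<gamma> = ind (W1 \<inter> W2) \<gamma>"
    proof (cases "\<gamma> \<in> W1")
      case True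
      then have "s \<gamma> = \<gamma>" using W1(3) G0_iff by blast
      then show ?thesis using e True unfolding ind_def by simp
    next
      case False
      then show ?thesis using e unfolding ind_def by simp
    qed
  qed
  then have i12: "ind (W1 \<inter> W2) \<in> I" using idl_r[OF I s2 W1(4)] by simp
  have "(\<lambda>g. ind (W1 \<inter> W2) g - ind W2 g) \<in> I" using idl_diff[OF I i12 W2(4)] .
  then have "(\<lambda>g. ind W1 g - (ind (W1 \<inter> W2) g - ind W2 g)) \<in> I" using idl_diff[OF I W1(4)] by blast
  moreover have "(\<lambda>g. ind W1 g - (ind (W1 \<inter> W2) g - ind W2 g)) = ind (W1 \<union> W2)"
    unfolding ind_def by (rule ext) simp
  ultimately have "ind (W1 \<union> W2) \<in> I" by simp
  moreover have "compactin T (W1 \<union> W2)" using compactin_Un W1(1) W2(1) by blast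
  moreover have "openin T (W1 \<union> W2)" using W1(2) W2(2) by blast
  ultimately show ?thesis unfolding good_def using W1(3) W2(3) by blast
qed

lemma good_Union:
  assumes I: "two_sided_ideal T m s r \<sigma> I" and "finite F" "\<forall>W\<in>F. good I W"
  shows "good I (\<Union>F)"
  using assms(2,3)
proof (induction F rule: finite_induct)
  case empty
  have "ind {} = (\<lambda>_. 0)" unfolding ind_def by simp
  then show ?case unfolding good_def using idl_zero[OF I] by simp
next
  case (insert W F)
  then show ?case using good_Un[OF I] by simp
qed

lemma good_invariant:
  assumes I: "two_sided_ideal T m s r \<sigma> I" and W: "good I W" and g: "\<gamma> \<in> G" "s \<gamma> \<in> W"
  shows "\<exists>W'. good I W' \<and> r \<gamma> \<in> W'"
proof -
  have W': "compactin T W" "openin T W" "W \<subseteq> G0" "ind W \<in> I" using W unfolding good_def by auto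
  have oU: "openin T {x \<in> G. s x \<in> W}" using openin_continuous_map_preimage[OF cont_s W'(2)] .
  obtain B where B: "open_bisection T s r B" "compactin T B" "\<gamma> \<in> B" "B \<subseteq> {x \<in> G. s x \<in> W}"
    using ampleD[OF oU] g by blast
  have oB: "openin T B" using bis_open[OF B(1)] .
  have BG: "B \<subseteq> G" using bis_sub[OF B(1)] .
  have sB: "ind B \<in> steinberg T" using ind_stein[OF B(2) oB] .
  have "conv T m s r \<sigma> (ind B) (ind W) = ind B"
  proof
    fix x
    have e: "conv T m s r \<sigma> (ind B) (ind W) x = (if s x \<in> W then ind B x * 1 else 0)"
      unfolding ind_def[of W] using conv_RU[OF W'(3) ind_out[OF BG], of 1 x] by simp
    show "conv T m s r \<sigma> (ind B) (ind W) x = ind B x"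
    proof (cases "x \<in> B")
      case True
      then have "s x \<in> W" using B(4) by blast
      then show ?thesis using e by simp
    next
      case False
      then show ?thesis using e unfolding ind_def by simp
    qed
  qed
  then have iB: "ind B \<in> I" using idl_l[OF I sB W'(4)] by simp
  have "conv T m s r \<sigma> (ind B) (linv B) \<in> I" using idl_r[OF I linv_stein[OF B(1,2)] iB] .
  moreover have "conv T m s r \<sigma> (ind B) (linv B) = ind (r ` B)"
    using conv_ind_linv[OF B(1)] by (rule ext)
  ultimately have "ind (r ` B) \<in> I" by simp
  moreover have "compactin T (r ` B)" using image_compactin[OF B(2) cont_r] .
  moreover have "openin T (r ` B)" using bis_img_open_r[OF B(1) oB] by simp
  moreover have "r ` B \<subseteq> G0" using rG0 BG by blast
  moreover have "r \<gamma> \<in> r ` B" using B(3) by blast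
  ultimately show ?thesis unfolding good_def by blast
qed

lemma min_all:
  assumes mn: "minimal T s r" and I: "two_sided_ideal T m s r \<sigma> I" and fI: "f \<in> I" and f0: "f \<gamma>0 \<noteq> 0"
  shows "steinberg T \<subseteq> I"
proof -
  have fS: "f \<in> steinberg T" using idl_sub[OF I] fI by blast
  have g0: "\<gamma>0 \<in> G" using stein_out[OF fS] f0 by blast
  obtain B' where B': "open_bisection T s r B'" "compactin T B'" "i \<gamma>0 \<in> B'"
    using ampleD[of G "i \<gamma>0"] cl[OF g0] by blast
  have sB': "ind B' \<in> steinberg T" using ind_stein[OF B'(2) bis_open[OF B'(1)]] .
  define g where "g = conv T m s r \<sigma> f (ind B')"
  have gI: "g \<in> I" unfolding g_def using idl_r[OF I sB' fI] .
  have "g (r \<gamma>0) = \<sigma> (\<gamma>0, i \<gamma>0) * f \<gamma>0" unfolding g_def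
    using conv_bis_inv[OF B'(1) g0 B'(3)] stein_out[OF fS] by blast
  moreover have "\<sigma> (\<gamma>0, i \<gamma>0) \<noteq> 0" using sig_nz comp_iff cl inv g0 by simp
  ultimately have gu: "g (r \<gamma>0) \<noteq> 0" using f0 by simp
  obtain V where V: "compactin T V" "openin T V" "V \<subseteq> G0" "V \<noteq> {}" "ind V \<in> I"
    using unit_in_ideal[OF I gI rG0[OF g0] gu] by blast
  define Ob where "Ob = \<Union>{W. good I W}"
  have OG0: "Ob \<subseteq> G0" unfolding Ob_def good_def by blast
  have oO: "openin T Ob" unfolding Ob_def good_def by blast
  have "V \<subseteq> Ob" using V unfolding Ob_def good_def by blast
  then have One: "Ob \<noteq> {}" using V(4) by blast
  have inv1: "r x \<in> Ob" if xx: "x \<in> G" "s x \<in> Ob" for x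
  proof -
    obtain W where "good I W" "s x \<in> W" using xx(2) unfolding Ob_def by blast
    then obtain W' where "good I W'" "r x \<in> W'" using good_invariant[OF I] xx(1) by blast
    then show ?thesis unfolding Ob_def by blast
  qed
  have "invariant T s r Ob"
    unfolding invariant_def
  proof (intro conjI OG0 ballI)
    fix x assume x: "x \<in> G"
    show "s x \<in> Ob \<longleftrightarrow> r x \<in> Ob"
    proof
      assume "s x \<in> Ob" then show "r x \<in> Ob" using inv1 x by blast
    next
      assume "r x \<in> Ob"
      then have "s (i x) \<in> Ob" using inv x by simp
      then have "r (i x) \<in> Ob" using inv1 cl x by blast
      then show "s x \<in> Ob" using inv x by simp
    qed
  qed
  moreover have "openin (subtopology T G0) Ob" using oO OG0 openin_open_subtopology[OF G0_open] by blast
  ultimately have OeqG0: "Ob = G0" using mn One unfolding minimal_def by blast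
  show ?thesis
  proof
    fix h :: "'g \<Rightarrow> 'k" assume hS: "h \<in> steinberg T"
    define R where "R = r ` supp h"
    have cR: "compactin T R" unfolding R_def using image_compactin[OF supp_compact[OF hS] cont_r] .
    have RO: "R \<subseteq> Ob" unfolding R_def OeqG0 supp_def using rG0 by blast
    have cov: "\<forall>x\<in>R. \<exists>U. openin T U \<and> x \<in> U \<and> good I U"
    proof
      fix x assume "x \<in> R"
      then obtain W where "good I W" "x \<in> W" using RO unfolding Ob_def by blast
      then show "\<exists>U. openin T U \<and> x \<in> U \<and> good I U" unfolding good_def by blast
    qed
    obtain F where F: "finite F" "\<forall>U\<in>F. openin T U \<and> good I U" "R \<subseteq> \<Union>F"
      using compact_cover[OF cR cov] by blast
    have gF: "good I (\<Union>F)" using good_Union[OF I F(1)] F(2) by blast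
    then have iF: "ind (\<Union>F) \<in> I" and FG0: "\<Union>F \<subseteq> G0" unfolding good_def by blast+
    have "conv T m s r \<sigma> (ind (\<Union>F)) h = h"
    proof
      fix x
      have e: "conv T m s r \<sigma> (ind (\<Union>F)) h x = (if r x \<in> \<Union>F then 1 * h x else 0)"
        unfolding ind_def using conv_LU[OF FG0, of h 1 x] stein_out[OF hS] by simp
      show "conv T m s r \<sigma> (ind (\<Union>F)) h x = h x"
      proof (cases "h x = 0")
        case True then show ?thesis using e by simp
      next
        case False
        then have "x \<in> supp h" unfolding supp_def using stein_out[OF hS] by blast
        then have "r x \<in> \<Union>F" using F(3) unfolding R_def by blast
        then show ?thesis using e by simp
      qed
    qed
    moreover have "conv T m s r \<sigma> (ind (\<Union>F)) h \<in> I" using idl_r[OF I hS iF] .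
    ultimately show "h \<in> I" by simp
  qed
qed

lemma minimal_imp_simple:
  assumes mn: "minimal T s r" shows "simple_steinberg T m s r \<sigma>"
  unfolding simple_steinberg_def
proof (intro allI impI)
  fix I assume I: "two_sided_ideal T m s r \<sigma> I"
  show "I = {\<lambda>_. 0} \<or> I = steinberg T"
  proof (cases "\<exists>f\<in>I. \<exists>x. f x \<noteq> 0")
    case True
    then obtain f x where "f \<in> I" "f x \<noteq> 0" by blast
    then have "steinberg T \<subseteq> I" using min_all[OF mn I] by blast
    then show ?thesis using idl_sub[OF I] by blast
  next
    case False
    then have "\<forall>f\<in>I. f = (\<lambda>_. 0)" by auto
    then show ?thesis using idl_zero[OF I] by blast
  qed
qed

lemma loc_branch:
  assumes B: "open_bisection T s r B" and aB: "a \<in> B" and g: "\<gamma> \<in> G" "r a = r \<gamma>"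
    and Wh: "openin T Wh" "m (i a) \<gamma> \<in> Wh"
    and Ws: "openin (prod_topology T T) Ws" "(a, m (i a) \<gamma>) \<in> Ws"
  shows "\<exists>N. openin T N \<and> \<gamma> \<in> N \<and>
     (\<forall>y\<in>N. y \<in> G \<and> (\<exists>x\<in>B. r x = r y \<and> m (i x) y \<in> Wh \<and> (x, m (i x) y) \<in> Ws))"
proof -
  have BG: "B \<subseteq> G" using bis_sub[OF B] .
  have "homeomorphic_map (subtopology T B) (subtopology T (r ` B)) r"
    using B unfolding open_bisection_def by blast
  then obtain q where q: "homeomorphic_maps (subtopology T B) (subtopology T (r ` B)) r q"
    using homeomorphic_map_maps by blast
  have qc: "continuous_map (subtopology T (r ` B)) (subtopology T B) q"
    and qr: "\<forall>x\<in>G \<inter> B. q (r x) = x" and rq: "\<forall>y\<in>G \<inter> r ` B. r (q y) = y"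
    using q unfolding homeomorphic_maps_def by auto
  have qB: "q y \<in> B" if "y \<in> r ` B" for y
  proof -
    have "y \<in> G" using that BG cl by blast
    then have "q y \<in> topspace (subtopology T B)" using continuous_map_image_subset_topspace[OF qc] that by auto
    then show ?thesis by simp
  qed
  have orB: "openin T (r ` B)" using bis_img_open_r[OF B bis_open[OF B]] by simp
  define X where "X = {y \<in> G. r y \<in> r ` B}"
  have oX: "openin T X" unfolding X_def using openin_continuous_map_preimage[OF cont_r orB] .
  define Z where "Z = subtopology T X"
  have tZ: "topspace Z = X" unfolding Z_def X_def by auto
  have c1: "continuous_map Z (subtopology T (r ` B)) r"
    unfolding Z_def X_def
    by (rule continuous_map_into_subtopology[OF continuous_map_from_subtopology[OF cont_r]]) auto
  have cphi: "continuous_map Z T (q \<circ> r)"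
    using continuous_map_compose[OF c1 qc] continuous_map_into_fulltopology by blast
  have ci: "continuous_map Z T (\<lambda>y. i ((q \<circ> r) y))"
    using continuous_map_compose[OF cphi cont_i] by (simp add: o_def)
  have cid: "continuous_map Z T (\<lambda>y. y)"
    using continuous_map_from_subtopology[OF continuous_map_id, of T X] unfolding Z_def id_def .
  have cpair: "continuous_map Z (prod_topology T T) (\<lambda>y. (i ((q \<circ> r) y), y))"
    by (intro continuous_map_pairedI ci cid)
  have comp: "(i ((q \<circ> r) y), y) \<in> composable T s r" if "y \<in> topspace Z" for y
  proof -
    have y: "y \<in> G" "r y \<in> r ` B" using that tZ X_def by auto
    have qy: "q (r y) \<in> B" using qB y(2) by blast
    have "r (q (r y)) = r y" using rq y cl by blast
    then show ?thesis using comp_iff cl inv qy BG y(1) by auto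
  qed
  have cpair2: "continuous_map Z (subtopology (prod_topology T T) (composable T s r)) (\<lambda>y. (i ((q \<circ> r) y), y))"
    using continuous_map_into_subtopology[OF cpair] comp by blast
  define psi where "psi = (\<lambda>y. m (i ((q \<circ> r) y)) y)"
  have cpsi: "continuous_map Z T psi"
    using continuous_map_compose[OF cpair2 cont_m] unfolding psi_def o_def by simp
  have cboth: "continuous_map Z (prod_topology T T) (\<lambda>y. ((q \<circ> r) y, psi y))"
    by (intro continuous_map_pairedI cphi cpsi)
  define N where "N = {y \<in> topspace Z. psi y \<in> Wh} \<inter> {y \<in> topspace Z. ((q \<circ> r) y, psi y) \<in> Ws}"
  have "openin Z N" unfolding N_def
    by (intro openin_Int openin_continuous_map_preimage[OF cpsi Wh(1)] openin_continuous_map_preimage[OF cboth Ws(1)])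
  then have oN: "openin T N" using openin_trans_full[OF _ oX] unfolding Z_def by blast
  have qa: "q (r \<gamma>) = a" using qr aB BG g(2) by (metis IntI subsetD)
  have rgB: "r \<gamma> \<in> r ` B" using aB g(2) by (metis image_eqI)
  have "\<gamma> \<in> topspace Z" using tZ g(1) rgB unfolding X_def by simp
  then have "\<gamma> \<in> N" unfolding N_def psi_def o_def using Wh(2) Ws(2) qa by simp
  moreover have "\<forall>y\<in>N. y \<in> G \<and> (\<exists>x\<in>B. r x = r y \<and> m (i x) y \<in> Wh \<and> (x, m (i x) y) \<in> Ws)"
  proof
    fix y assume y: "y \<in> N"
    then have yX: "y \<in> G" "r y \<in> r ` B" unfolding N_def tZ X_def by auto
    have "q (r y) \<in> B" using qB yX(2) by blast
    moreover have "r (q (r y)) = r y" using rq yX cl by blast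
    moreover have "m (i (q (r y))) y \<in> Wh" "(q (r y), m (i (q (r y))) y) \<in> Ws"
      using y unfolding N_def psi_def by auto
    ultimately show "y \<in> G \<and> (\<exists>x\<in>B. r x = r y \<and> m (i x) y \<in> Wh \<and> (x, m (i x) y) \<in> Ws)"
      using yX(1) by blast
  qed
  ultimately show ?thesis using oN by blast
qed

lemma fin_bis: assumes "open_bisection T s r U" shows "finite {a \<in> U. r a = x}"
proof (cases "\<exists>a\<in>U. r a = x")
  case True
  then obtain a0 where a0: "a0 \<in> U" "r a0 = x" by blast
  have "{a \<in> U. r a = x} \<subseteq> {a0}"
  proof
    fix a assume "a \<in> {a \<in> U. r a = x}"
    then have "a \<in> U" "r a = r a0" using a0 by auto
    then have "a = a0" using bis_inj_r[OF assms] a0(1) by (metis inj_onD)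
    then show "a \<in> {a0}" by simp
  qed
  then show ?thesis using finite_subset by blast
next
  case False
  have e: "{a \<in> U. r a = x} = {}" using False by blast
  show ?thesis unfolding e by simp
qed

lemma fin_fiber: assumes K: "compactin T K" shows "finite {a \<in> K. r a = x}"
proof -
  have KG: "K \<subseteq> G" using compactin_subset_topspace[OF K] .
  have cov: "\<forall>y\<in>K. \<exists>U. openin T U \<and> y \<in> U \<and> open_bisection T s r U"
  proof
    fix y assume "y \<in> K"
    then have "y \<in> G" using KG by blast
    then obtain U where "open_bisection T s r U" "y \<in> U" using ampleD[OF openin_topspace] by blast
    then show "\<exists>U. openin T U \<and> y \<in> U \<and> open_bisection T s r U" using bis_open by blast
  qed
  obtain F where F: "finite F" "\<forall>U\<in>F. openin T U \<and> open_bisection T s r U" "K \<subseteq> \<Union>F"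
    using compact_cover[OF K cov] by blast
  have "{a \<in> K. r a = x} \<subseteq> (\<Union>U\<in>F. {a \<in> U. r a = x})" using F(3) by blast
  moreover have "finite (\<Union>U\<in>F. {a \<in> U. r a = x})" using F(1,2) fin_bis by blast
  ultimately show ?thesis using finite_subset by blast
qed

lemma sep:
  assumes "finite A" "A \<subseteq> G"
  shows "\<exists>P. (\<forall>a\<in>A. openin T (P a) \<and> a \<in> P a) \<and> (\<forall>a\<in>A. \<forall>b\<in>A. a \<noteq> b \<longrightarrow> P a \<inter> P b = {})"
  using assms
proof (induction A rule: finite_induct)
  case empty
  then show ?case by blast
next
  case (insert x A)
  have AG: "A \<subseteq> G" using insert.prems by simp
  obtain P where P: "\<forall>a\<in>A. openin T (P a) \<and> a \<in> P a" "\<forall>a\<in>A. \<forall>b\<in>A. a \<noteq> b \<longrightarrow> P a \<inter> P b = {}"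
    using insert.IH[OF AG] by metis
  have ex: "\<forall>a\<in>A. \<exists>UV. openin T (fst UV) \<and> openin T (snd UV) \<and> x \<in> fst UV \<and> a \<in> snd UV \<and> disjnt (fst UV) (snd UV)"
  proof
    fix a assume a: "a \<in> A"
    have "x \<in> G \<and> a \<in> G \<and> x \<noteq> a" using insert.prems insert.hyps(2) a by blast
    then have "\<exists>U V. openin T U \<and> openin T V \<and> x \<in> U \<and> a \<in> V \<and> disjnt U V"
      using haus[unfolded Hausdorff_space_def, rule_format] by blast
    then show "\<exists>UV. openin T (fst UV) \<and> openin T (snd UV) \<and> x \<in> fst UV \<and> a \<in> snd UV \<and> disjnt (fst UV) (snd UV)"
      by auto
  qed
  then obtain UV where UV: "\<forall>a\<in>A. openin T (fst (UV a)) \<and> openin T (snd (UV a)) \<and> x \<in> fst (UV a) \<and> a \<in> snd (UV a) \<and> disjnt (fst (UV a)) (snd (UV a))"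
    using bchoice[OF ex] by metis
  define P' where "P' = (\<lambda>y. if y = x then G \<inter> \<Inter>((\<lambda>a. fst (UV a)) ` A) else P y \<inter> snd (UV y))"
  have "\<forall>a\<in>insert x A. openin T (P' a) \<and> a \<in> P' a"
  proof
    fix a assume a: "a \<in> insert x A"
    show "openin T (P' a) \<and> a \<in> P' a"
    proof (cases "a = x")
      case True
      have "openin T (G \<inter> \<Inter>((\<lambda>a. fst (UV a)) ` A))"
        using openin_Int_Inter[of "(\<lambda>a. fst (UV a)) ` A" T G] insert.hyps(1) UV by auto
      moreover have "x \<in> G \<inter> \<Inter>((\<lambda>a. fst (UV a)) ` A)" using UV insert.prems by auto
      ultimately show ?thesis unfolding P'_def using True by simp
    next
      case False
      then have "a \<in> A" using a by blast
      then show ?thesis unfolding P'_def using False P(1) UV by auto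
    qed
  qed
  moreover have "\<forall>a\<in>insert x A. \<forall>b\<in>insert x A. a \<noteq> b \<longrightarrow> P' a \<inter> P' b = {}"
  proof (intro ballI impI)
    fix a b assume a: "a \<in> insert x A" and b: "b \<in> insert x A" and ab: "a \<noteq> b"
    have xd: "P' x \<inter> P' c = {}" if c: "c \<in> A" for c
    proof -
      have "c \<noteq> x" using c insert.hyps(2) by blast
      then have "P' x \<subseteq> fst (UV c)" "P' c \<subseteq> snd (UV c)" unfolding P'_def using c by auto
      then show ?thesis using UV c unfolding disjnt_def by blast
    qed
    show "P' a \<inter> P' b = {}"
    proof (cases "a = x")
      case True
      then have "b \<in> A" using b ab by blast
      then show ?thesis using xd True by blast
    next
      case False
      then have aA: "a \<in> A" using a by blast
      show ?thesis
      proof (cases "b = x")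
        case True then show ?thesis using xd[OF aA] by blast
      next
        case False
        then have "b \<in> A" using b by blast
        moreover have "P' a \<subseteq> P a" "P' b \<subseteq> P b" unfolding P'_def using \<open>a \<noteq> x\<close> False by auto
        ultimately show ?thesis using P(2) aA ab by blast
      qed
    qed
  qed
  ultimately show ?case by blast
qed

lemma branch_data:
  assumes fS: "f \<in> steinberg T" and hS: "h \<in> steinberg T" and a: "a \<in> G" "r a = r \<gamma>"
    and g: "\<gamma> \<in> G" and P: "openin T P" "a \<in> P"
  shows "\<exists>BB. open_bisection T s r BB \<and> a \<in> BB \<and> BB \<subseteq> P \<and> (\<forall>y\<in>BB. f y = f a) \<and>
    (\<exists>Nd. openin T Nd \<and> \<gamma> \<in> Nd \<and> (\<forall>y\<in>Nd. y \<in> G \<and> (\<exists>x\<in>BB. r x = r y \<and>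
        h (m (i x) y) = h (m (i a) \<gamma>) \<and> \<sigma> (x, m (i x) y) = \<sigma> (a, m (i a) \<gamma>))))"
proof -
  obtain Wf where Wf: "openin T Wf" "a \<in> Wf" "\<forall>y\<in>Wf. f y = f a" using stein_lc[OF fS a(1)] by blast
  obtain BB where BB: "open_bisection T s r BB" "a \<in> BB" "BB \<subseteq> P \<inter> Wf"
    using ampleD[OF openin_Int[OF P(1) Wf(1)]] P(2) Wf(2) by blast
  have fc: "\<forall>y\<in>BB. f y = f a" using BB(3) Wf(3) by blast
  define b where "b = m (i a) \<gamma>"
  have ia: "i a \<in> G" "s (i a) = r \<gamma>" using cl inv a by auto
  have bG: "b \<in> G" and rb: "r b = s a" unfolding b_def using mG[OF ia(1) g ia(2)] inv a(1) by auto
  obtain Wh where Wh: "openin T Wh" "b \<in> Wh" "\<forall>y\<in>Wh. h y = h b" using stein_lc[OF hS bG] by blast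
  have abc: "(a, b) \<in> composable T s r" using comp_iff a(1) bG rb by simp
  obtain Ws where Ws: "openin (prod_topology T T) Ws" "(a, b) \<in> Ws"
    "\<forall>q\<in>Ws \<inter> composable T s r. \<sigma> q = \<sigma> (a, b)" using sig_lc[OF abc] by blast
  obtain Nd where Nd: "openin T Nd" "\<gamma> \<in> Nd"
    "\<forall>y\<in>Nd. y \<in> G \<and> (\<exists>x\<in>BB. r x = r y \<and> m (i x) y \<in> Wh \<and> (x, m (i x) y) \<in> Ws)"
    using loc_branch[OF BB(1) BB(2) g a(2) Wh(1) Wh(2)[unfolded b_def] Ws(1) Ws(2)[unfolded b_def]]
    unfolding b_def by blast
  have "\<forall>y\<in>Nd. y \<in> G \<and> (\<exists>x\<in>BB. r x = r y \<and> h (m (i x) y) = h b \<and> \<sigma> (x, m (i x) y) = \<sigma> (a, b))"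
  proof
    fix y assume y: "y \<in> Nd"
    then obtain x where x: "x \<in> BB" "r x = r y" "m (i x) y \<in> Wh" "(x, m (i x) y) \<in> Ws" and yG: "y \<in> G"
      using Nd(3) by blast
    have xG: "x \<in> G" using x(1) bis_sub[OF BB(1)] by blast
    have ix: "i x \<in> G" "s (i x) = r y" using cl inv xG x(2) by auto
    have "m (i x) y \<in> G" "r (m (i x) y) = s x" using mG[OF ix(1) yG ix(2)] inv xG by auto
    then have "(x, m (i x) y) \<in> composable T s r" using comp_iff xG by simp
    then have "\<sigma> (x, m (i x) y) = \<sigma> (a, b)" using Ws(3) x(4) by blast
    moreover have "h (m (i x) y) = h b" using Wh(3) x(3) by blast
    ultimately show "y \<in> G \<and> (\<exists>x\<in>BB. r x = r y \<and> h (m (i x) y) = h b \<and> \<sigma> (x, m (i x) y) = \<sigma> (a, b))"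
      using x(1,2) yG by blast
  qed
  then show ?thesis using BB(1,2) BB(3) fc Nd(1,2) unfolding b_def by blast
qed

lemma conv_lc:
  assumes fS: "f \<in> steinberg T" and hS: "h \<in> steinberg T" and g: "\<gamma> \<in> G"
  shows "\<exists>W. openin T W \<and> \<gamma> \<in> W \<and> (\<forall>y\<in>W. conv T m s r \<sigma> f h y = conv T m s r \<sigma> f h \<gamma>)"
proof -
  define A where "A = {a \<in> supp f. r a = r \<gamma>}"
  have finA: "finite A" unfolding A_def using fin_fiber[OF supp_compact[OF fS]] .
  have AG: "A \<subseteq> G" unfolding A_def supp_def by blast
  have Af: "\<And>a. a \<in> A \<Longrightarrow> a \<in> G \<and> f a \<noteq> 0 \<and> r a = r \<gamma>" unfolding A_def supp_def by blast
  obtain P where P: "\<forall>a\<in>A. openin T (P a) \<and> a \<in> P a" "\<forall>a\<in>A. \<forall>b\<in>A. a \<noteq> b \<longrightarrow> P a \<inter> P b = {}"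
    using sep[OF finA AG] by metis
  define bb where "bb a = m (i a) \<gamma>" for a
  have ex1: "\<forall>a\<in>A. \<exists>BB. open_bisection T s r BB \<and> a \<in> BB \<and> BB \<subseteq> P a \<and> (\<forall>y\<in>BB. f y = f a) \<and>
    (\<exists>Nd. openin T Nd \<and> \<gamma> \<in> Nd \<and> (\<forall>y\<in>Nd. y \<in> G \<and> (\<exists>x\<in>BB. r x = r y \<and>
        h (m (i x) y) = h (bb a) \<and> \<sigma> (x, m (i x) y) = \<sigma> (a, bb a))))"
  proof
    fix a assume a: "a \<in> A"
    show "\<exists>BB. open_bisection T s r BB \<and> a \<in> BB \<and> BB \<subseteq> P a \<and> (\<forall>y\<in>BB. f y = f a) \<and>
    (\<exists>Nd. openin T Nd \<and> \<gamma> \<in> Nd \<and> (\<forall>y\<in>Nd. y \<in> G \<and> (\<exists>x\<in>BB. r x = r y \<and>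
        h (m (i x) y) = h (bb a) \<and> \<sigma> (x, m (i x) y) = \<sigma> (a, bb a))))"
      unfolding bb_def using branch_data[OF fS hS _ _ g, of a "P a"] Af[OF a] P(1) a by blast
  qed
  obtain BB where BB: "\<forall>a\<in>A. open_bisection T s r (BB a) \<and> a \<in> BB a \<and> BB a \<subseteq> P a \<and> (\<forall>y\<in>BB a. f y = f a) \<and>
    (\<exists>Nd. openin T Nd \<and> \<gamma> \<in> Nd \<and> (\<forall>y\<in>Nd. y \<in> G \<and> (\<exists>x\<in>BB a. r x = r y \<and>
        h (m (i x) y) = h (bb a) \<and> \<sigma> (x, m (i x) y) = \<sigma> (a, bb a))))"
    using bchoice[OF ex1] by metis
  have ex2: "\<forall>a\<in>A. \<exists>Nd. openin T Nd \<and> \<gamma> \<in> Nd \<and> (\<forall>y\<in>Nd. y \<in> G \<and> (\<exists>x\<in>BB a. r x = r y \<and>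
        h (m (i x) y) = h (bb a) \<and> \<sigma> (x, m (i x) y) = \<sigma> (a, bb a)))"
    using BB by blast
  obtain Nd where Nd: "\<forall>a\<in>A. openin T (Nd a) \<and> \<gamma> \<in> Nd a \<and> (\<forall>y\<in>Nd a. y \<in> G \<and> (\<exists>x\<in>BB a. r x = r y \<and>
        h (m (i x) y) = h (bb a) \<and> \<sigma> (x, m (i x) y) = \<sigma> (a, bb a)))"
    using bchoice[OF ex2] by metis
  have BBb: "\<And>a. a \<in> A \<Longrightarrow> open_bisection T s r (BB a)" using BB by blast
  have BBP: "\<And>a. a \<in> A \<Longrightarrow> BB a \<subseteq> P a" using BB by blast
  have BBa: "\<And>a. a \<in> A \<Longrightarrow> a \<in> BB a" using BB by blast
  have BBf: "\<And>a y. a \<in> A \<Longrightarrow> y \<in> BB a \<Longrightarrow> f y = f a" using BB by blast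
  have BBG: "\<And>a. a \<in> A \<Longrightarrow> BB a \<subseteq> G" using bis_sub BBb by blast
  define C where "C = supp f \<inter> (G - \<Union>(BB ` A))"
  have "openin T (\<Union>(BB ` A))" using BBb bis_open by blast
  then have "closedin T (G - \<Union>(BB ` A))" by (simp add: closedin_diff)
  then have cC: "compactin T C" unfolding C_def using compact_Int_closedin[OF supp_compact[OF fS]] by blast
  have "closedin T (r ` C)" using compactin_imp_closedin[OF haus image_compactin[OF cC cont_r]] .
  then have oN0: "openin T (G - r ` C)" by (simp add: openin_diff)
  define Nw where "Nw = {y \<in> G. r y \<in> G - r ` C} \<inter> \<Inter>(Nd ` A)"
  have oN0': "openin T {y \<in> G. r y \<in> G - r ` C}" using openin_continuous_map_preimage[OF cont_r oN0] .
  have oNw: "openin T Nw" unfolding Nw_def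
    by (rule openin_Int_Inter) (use finA oN0' Nd in auto)
  have gNw: "\<gamma> \<in> Nw"
  proof -
    have "r \<gamma> \<notin> r ` C"
    proof
      assume "r \<gamma> \<in> r ` C"
      then obtain c where c: "c \<in> C" "r \<gamma> = r c" by blast
      then have "c \<in> A" unfolding C_def A_def by auto
      then have "c \<in> BB c" using BBa by blast
      then show False using c(1) \<open>c \<in> A\<close> unfolding C_def by blast
    qed
    then show ?thesis unfolding Nw_def using g cl Nd by blast
  qed
  define Ah where "Ah = {a \<in> A. h (bb a) \<noteq> 0}"
  define val where "val a = \<sigma> (a, bb a) * f a * h (bb a)" for a
  have key: "conv T m s r \<sigma> f h y = (\<Sum>a\<in>Ah. val a)" if yN: "y \<in> Nw" for y
  proof -
    have yG: "y \<in> G" using yN unfolding Nw_def by blast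
    define phi where "phi a = (SOME x. x \<in> BB a \<and> r x = r y \<and> h (m (i x) y) = h (bb a) \<and> \<sigma> (x, m (i x) y) = \<sigma> (a, bb a))" for a
    have phi: "phi a \<in> BB a \<and> r (phi a) = r y \<and> h (m (i (phi a)) y) = h (bb a) \<and> \<sigma> (phi a, m (i (phi a)) y) = \<sigma> (a, bb a)"
      if a: "a \<in> A" for a
    proof -
      have "y \<in> Nd a" using yN a unfolding Nw_def by blast
      then have "\<exists>x. x \<in> BB a \<and> r x = r y \<and> h (m (i x) y) = h (bb a) \<and> \<sigma> (x, m (i x) y) = \<sigma> (a, bb a)"
        using Nd a by blast
      then show ?thesis unfolding phi_def by (rule someI_ex)
    qed
    define th where "th a = (phi a, m (i (phi a)) y)" for a
    let ?S = "{(a, b). (a, b) \<in> composable T s r \<and> m a b = y \<and> f a \<noteq> 0 \<and> h b \<noteq> 0}"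
    have thS: "th a \<in> ?S \<and> \<sigma> (th a) * f (fst (th a)) * h (snd (th a)) = val a" if a: "a \<in> Ah" for a
    proof -
      have aA: "a \<in> A" and hb: "h (bb a) \<noteq> 0" using a unfolding Ah_def by auto
      note ph = phi[OF aA]
      have pG: "phi a \<in> G" using ph BBG[OF aA] by blast
      have ip: "i (phi a) \<in> G" "s (i (phi a)) = r y" using cl inv pG ph by auto
      have mG1: "m (i (phi a)) y \<in> G" "r (m (i (phi a)) y) = s (phi a)"
        using mG[OF ip(1) yG ip(2)] inv pG by auto
      have c: "(phi a, m (i (phi a)) y) \<in> composable T s r" using comp_iff pG mG1 by simp
      have "m (phi a) (m (i (phi a)) y) = m (m (phi a) (i (phi a))) y"
        using assoc[OF pG ip(1) yG] inv pG ip(2) by simp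
      also have "\<dots> = m (r (phi a)) y" using inv pG by simp
      also have "\<dots> = y" using ph unitl yG by simp
      finally have my: "m (phi a) (m (i (phi a)) y) = y" .
      have fp: "f (phi a) = f a" using BBf[OF aA] ph by blast
      have fa: "f a \<noteq> 0" using Af[OF aA] by blast
      show ?thesis unfolding th_def val_def using c my fp fa ph hb by simp
    qed
    have inj: "inj_on th Ah"
    proof
      fix a1 a2 assume a1: "a1 \<in> Ah" and a2: "a2 \<in> Ah" and e: "th a1 = th a2"
      have A12: "a1 \<in> A" "a2 \<in> A" using a1 a2 unfolding Ah_def by auto
      have "phi a1 = phi a2" using e unfolding th_def by simp
      moreover have "phi a1 \<in> BB a1" "phi a2 \<in> BB a2" using phi[OF A12(1)] phi[OF A12(2)] by blast+
      ultimately have "phi a1 \<in> P a1 \<inter> P a2" using BBP[OF A12(1)] BBP[OF A12(2)] by (metis IntI subsetD)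
      then show "a1 = a2"
      proof (rule contrapos_pp)
        assume "a1 \<noteq> a2"
        then have "P a1 \<inter> P a2 = {}" using P(2) A12 by blast
        then show "phi a1 \<notin> P a1 \<inter> P a2" by blast
      qed
    qed
    have img: "th ` Ah = ?S"
    proof
      show "th ` Ah \<subseteq> ?S"
      proof
        fix p assume "p \<in> th ` Ah"
        then obtain a where a: "a \<in> Ah" and pa: "p = th a" by blast
        show "p \<in> ?S" unfolding pa using conjunct1[OF thS[OF a]] .
      qed
    next
      show "?S \<subseteq> th ` Ah"
      proof
        fix p assume p: "p \<in> ?S"
        obtain a' b' where ab: "p = (a', b')" using surj_pair[of p] by blast
        have c: "a' \<in> G" "b' \<in> G" "s a' = r b'" "m a' b' = y" "f a' \<noteq> 0" "h b' \<noteq> 0"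
          using p comp_iff unfolding ab by auto
        have ra: "r a' = r y" using mG[OF c(1,2,3)] c(4) by auto
        have "a' \<in> supp f" unfolding supp_def using c by blast
        moreover have "r y \<notin> r ` C" using yN unfolding Nw_def by blast
        ultimately have "a' \<notin> C" using ra by (metis image_eqI)
        then have "a' \<in> \<Union>(BB ` A)" using \<open>a' \<in> supp f\<close> c(1) unfolding C_def by blast
        then obtain a where aA: "a \<in> A" and aB: "a' \<in> BB a" by blast
        note ph = phi[OF aA]
        have "phi a = a'" using bis_inj_r[OF BBb[OF aA]] ph aB ra by (metis inj_onD)
        moreover have "b' = m (i a') y" using cancel[OF c(1,2,3)] c(4) by simp
        ultimately have pth: "p = th a" unfolding ab th_def by simp
        have "h (bb a) \<noteq> 0" using ph c(6) \<open>phi a = a'\<close> \<open>b' = m (i a') y\<close> by simp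
        then have "a \<in> Ah" unfolding Ah_def using aA by blast
        then show "p \<in> th ` Ah" using pth by blast
      qed
    qed
    have bij: "bij_betw th Ah ?S" unfolding bij_betw_def using inj img by blast
    have "conv T m s r \<sigma> f h y = (\<Sum>p\<in>?S. (case p of (a, b) \<Rightarrow> \<sigma> (a, b) * f a * h b))"
      unfolding conv_def by simp
    also have "\<dots> = (\<Sum>a\<in>Ah. (case th a of (a, b) \<Rightarrow> \<sigma> (a, b) * f a * h b))"
      using sum.reindex_bij_betw[OF bij, of "\<lambda>p. case p of (a, b) \<Rightarrow> \<sigma> (a, b) * f a * h b"] by simp
    also have "\<dots> = (\<Sum>a\<in>Ah. val a)"
    proof (rule sum.cong)
      fix a assume a: "a \<in> Ah"
      have "(case th a of (a, b) \<Rightarrow> \<sigma> (a, b) * f a * h b) = \<sigma> (th a) * f (fst (th a)) * h (snd (th a))"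
        by (cases "th a") simp
      then show "(case th a of (a, b) \<Rightarrow> \<sigma> (a, b) * f a * h b) = val a" using thS[OF a] by simp
    qed simp
    finally show ?thesis .
  qed
  have "\<forall>y\<in>Nw. conv T m s r \<sigma> f h y = conv T m s r \<sigma> f h \<gamma>" using key gNw by simp
  then show ?thesis using oNw gNw by blast
qed

lemma conv_nz:
  assumes "conv T m s r \<sigma> f h \<gamma> \<noteq> 0"
  shows "\<exists>a b. (a, b) \<in> composable T s r \<and> m a b = \<gamma> \<and> f a \<noteq> 0 \<and> h b \<noteq> 0"
proof (rule ccontr)
  assume "\<not> ?thesis"
  then have e: "{(a, b). (a, b) \<in> composable T s r \<and> m a b = \<gamma> \<and> f a \<noteq> 0 \<and> h b \<noteq> 0} = {}" by blast
  have "conv T m s r \<sigma> f h \<gamma> = 0" unfolding conv_def e by simp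
  then show False using assms by simp
qed

lemma stein_conv:
  assumes fS: "f \<in> steinberg T" and hS: "h \<in> steinberg T"
  shows "conv T m s r \<sigma> f h \<in> steinberg T"
proof -
  have o: "\<forall>g. g \<notin> G \<longrightarrow> conv T m s r \<sigma> f h g = 0"
  proof (intro allI impI)
    fix g assume g: "g \<notin> G"
    show "conv T m s r \<sigma> f h g = 0"
    proof (rule ccontr)
      assume "conv T m s r \<sigma> f h g \<noteq> 0"
      then obtain a b where "(a, b) \<in> composable T s r" "m a b = g" using conv_nz by blast
      then show False using g mG comp_iff by metis
    qed
  qed
  have lc: "\<forall>x\<in>G. \<exists>W. openin T W \<and> x \<in> W \<and> (\<forall>y\<in>W. conv T m s r \<sigma> f h y = conv T m s r \<sigma> f h x)"
    using conv_lc[OF fS hS] by blast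
  define S where "S = (supp f \<times> supp h) \<inter> composable T s r"
  have cS1: "compactin (prod_topology T T) (supp f \<times> supp h)"
    using compactin_Times supp_compact[OF fS] supp_compact[OF hS] by blast
  have cs: "continuous_map (prod_topology T T) T (s \<circ> fst)"
    using continuous_map_compose[OF continuous_map_fst cont_s] .
  have cr: "continuous_map (prod_topology T T) T (r \<circ> snd)"
    using continuous_map_compose[OF continuous_map_snd cont_r] .
  have "closedin (prod_topology T T) {p \<in> topspace (prod_topology T T). (s \<circ> fst) p = (r \<circ> snd) p}"
    using closedin_continuous_maps_eq[OF haus cs cr] .
  moreover have "{p \<in> topspace (prod_topology T T). (s \<circ> fst) p = (r \<circ> snd) p} = composable T s r"
    unfolding composable_def by auto
  ultimately have ccomp: "closedin (prod_topology T T) (composable T s r)" by simp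
  have "compactin (prod_topology T T) S" unfolding S_def using compact_Int_closedin[OF cS1 ccomp] .
  then have "compactin (subtopology (prod_topology T T) (composable T s r)) S"
    unfolding compactin_subtopology S_def by blast
  then have cK: "compactin T ((\<lambda>(a, b). m a b) ` S)" using image_compactin[OF _ cont_m] by blast
  have z: "\<forall>g. g \<notin> (\<lambda>(a, b). m a b) ` S \<longrightarrow> conv T m s r \<sigma> f h g = 0"
  proof (intro allI impI)
    fix g assume g: "g \<notin> (\<lambda>(a, b). m a b) ` S"
    show "conv T m s r \<sigma> f h g = 0"
    proof (rule ccontr)
      assume "conv T m s r \<sigma> f h g \<noteq> 0"
      then obtain a b where ab: "(a, b) \<in> composable T s r" "m a b = g" "f a \<noteq> 0" "h b \<noteq> 0" using conv_nz by blast
      then have "(a, b) \<in> S" unfolding S_def supp_def using comp_iff by auto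
      then have "g \<in> (\<lambda>(a, b). m a b) ` S" using ab(2) by force
      then show False using g by blast
    qed
  qed
  show ?thesis by (rule steinI[OF o lc cK z])
qed

lemma simple_imp_minimal:
  assumes sm: "simple_steinberg T m s r \<sigma>" shows "minimal T s r"
  unfolding minimal_def
proof (intro allI impI)
  fix U assume U: "openin (subtopology T G0) U \<and> invariant T s r U"
  have oU: "openin T U" using U openin_trans_full[OF _ G0_open] by blast
  have UG0: "U \<subseteq> G0" using U unfolding invariant_def by blast
  have inv: "\<And>g. g \<in> G \<Longrightarrow> s g \<in> U \<longleftrightarrow> r g \<in> U" using U unfolding invariant_def by blast
  show "U = {} \<or> U = G0"
  proof (rule ccontr)
    assume nt: "\<not> (U = {} \<or> U = G0)"
    define I :: "('g \<Rightarrow> 'k) set" where "I = {f \<in> steinberg T. \<forall>g. f g \<noteq> 0 \<longrightarrow> s g \<in> U}"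
    have idl: "two_sided_ideal T m s r \<sigma> I"
      unfolding two_sided_ideal_def
    proof (intro conjI ballI)
      show "I \<subseteq> steinberg T" unfolding I_def by blast
      show "(\<lambda>_. 0) \<in> I" unfolding I_def using stein_zero by simp
    next
      fix f h assume f: "f \<in> I" and h: "h \<in> I"
      have fS: "f \<in> steinberg T" and hS: "h \<in> steinberg T" using f h unfolding I_def by blast+
      have fU: "\<forall>g. f g \<noteq> 0 \<longrightarrow> s g \<in> U" and hU: "\<forall>g. h g \<noteq> 0 \<longrightarrow> s g \<in> U"
        using f h unfolding I_def by blast+
      have "\<forall>g. f g - h g \<noteq> 0 \<longrightarrow> s g \<in> U"
      proof (intro allI impI)
        fix g assume "f g - h g \<noteq> 0"
        then have "f g \<noteq> 0 \<or> h g \<noteq> 0" by auto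
        then show "s g \<in> U" using fU hU by blast
      qed
      then show "(\<lambda>g. f g - h g) \<in> I" unfolding I_def using stein_diff[OF fS hS] by blast
    next
      fix f and a :: "'g \<Rightarrow> 'k" assume f: "f \<in> I" and a: "a \<in> steinberg T"
      have fS: "f \<in> steinberg T" using f unfolding I_def by blast
      have fU: "\<And>g. f g \<noteq> 0 \<Longrightarrow> s g \<in> U" using f unfolding I_def by blast
      have "\<forall>g. conv T m s r \<sigma> a f g \<noteq> 0 \<longrightarrow> s g \<in> U"
      proof (intro allI impI)
        fix g assume "conv T m s r \<sigma> a f g \<noteq> 0"
        then obtain x y where xy: "(x, y) \<in> composable T s r" "m x y = g" "a x \<noteq> 0" "f y \<noteq> 0" using conv_nz by blast
        have "s g = s y" using xy(2) mG comp_iff xy(1) by metis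
        then show "s g \<in> U" using fU xy(4) by simp
      qed
      then show "conv T m s r \<sigma> a f \<in> I" unfolding I_def using stein_conv[OF a fS] by blast
      have "\<forall>g. conv T m s r \<sigma> f a g \<noteq> 0 \<longrightarrow> s g \<in> U"
      proof (intro allI impI)
        fix g assume "conv T m s r \<sigma> f a g \<noteq> 0"
        then obtain x y where xy: "(x, y) \<in> composable T s r" "m x y = g" "f x \<noteq> 0" "a y \<noteq> 0" using conv_nz by blast
        have c: "x \<in> G" "y \<in> G" "s x = r y" using xy(1) comp_iff by auto
        have gG: "g \<in> G" and rg: "r g = r x" using mG[OF c] xy(2) by auto
        have "s x \<in> U" using fU xy(3) by simp
        then have "r x \<in> U" using inv c(1) by blast
        then have "r g \<in> U" using rg by simp
        then show "s g \<in> U" using inv gG by blast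
      qed
      then show "conv T m s r \<sigma> f a \<in> I" unfolding I_def using stein_conv[OF fS a] by blast
    qed
    obtain x where x: "x \<in> U" using nt by blast
    obtain B where B: "open_bisection T s r B" "compactin T B" "x \<in> B" "B \<subseteq> U" using ampleD[OF oU x] by blast
    have iB: "ind B \<in> steinberg T" using ind_stein[OF B(2) bis_open[OF B(1)]] .
    have "\<forall>g. ind B g \<noteq> 0 \<longrightarrow> s g \<in> U"
    proof (intro allI impI)
      fix g assume "ind B g \<noteq> 0"
      then have "g \<in> U" using B(4) unfolding ind_def by (auto split: if_splits)
      moreover have "s g = g" using calculation UG0 G0_iff by blast
      ultimately show "s g \<in> U" by simp
    qed
    then have "ind B \<in> I" unfolding I_def using iB by blast
    moreover have "ind B \<noteq> (\<lambda>_. 0)"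
    proof
      assume "ind B = (\<lambda>_. 0)"
      then have "ind B x = 0" by simp
      then show False using B(3) unfolding ind_def by simp
    qed
    ultimately have n0: "I \<noteq> {\<lambda>_. 0}" by blast
    obtain y where y: "y \<in> G0" "y \<notin> U" using nt UG0 by blast
    have yG: "y \<in> G" using y G0_sub by blast
    obtain B' where B': "open_bisection T s r B'" "compactin T B'" "y \<in> B'" using ampleD[OF openin_topspace yG] by blast
    have iB': "ind B' \<in> steinberg T" using ind_stein[OF B'(2) bis_open[OF B'(1)]] .
    have "ind B' y \<noteq> 0" using B'(3) unfolding ind_def by simp
    moreover have "s y = y" using y G0_iff by blast
    ultimately have "ind B' \<notin> I" using y(2) unfolding I_def by force
    then have "I \<noteq> steinberg T" using iB' by blast
    then show False using sm idl n0 unfolding simple_steinberg_def by blast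
  qed
qed

end

theorem theorem6p2:
  fixes T :: "'g topology" and m :: "'g \<Rightarrow> 'g \<Rightarrow> 'g" and i s r :: "'g \<Rightarrow> 'g"
    and \<sigma> :: "'g \<times> 'g \<Rightarrow> 'k::field"
  assumes "lch_top_groupoid T m i s r"
    and "ample T s r"
    and "effective T s r"
    and "cocycle T m s r \<sigma>"
  shows "simple_steinberg T m s r \<sigma> \<longleftrightarrow> minimal T s r"
proof -
  interpret SG T m i s r \<sigma> using assms by (unfold_locales)
  show ?thesis using simple_imp_minimal minimal_imp_simple by blast
qed

end
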